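(* Let $T$ be an anonymous, non-counterfactual, reasonable tail test. If $T\not\sim\mathcal{D}$, then for every $0<\epsilon<1$ there exists a pair $\hat f=(\hat f_0,\hat f_1)\in F\times F$ such that $$P_0^{\hat f}(\{T(\cdot,\hat f)=1\})>1-\epsilon\quad\text{or}\quad P_1^{\hat f}(\{T(\cdot,\hat f)=0\})>1-\epsilon.$$
   Context: Let $\Omega=\{0,1\}$ and let $\Omega^\infty$ be the set of infinite sequences $\omega=(\omega_1,\omega_2,\dots)$; $\omega^t=(\omega_1,\dots,\omega_t)$ denotes the prefix and also the cylinder set $\{\hat\omega:\hat\omega^t=\omega^t\}$; $\Omega^\infty$ carries the $\sigma$-algebra generated by cylinders. $\Delta(\Omega)$ is the set of probability distributions on $\Omega$. A forecasting strategy is a function $f:\bigcup_{t\ge 0}(\Omega\times\Delta(\Omega)\times\Delta(\Omega))^t\to\Delta(\Omega)$; $F$ is the set of all forecasting strategies. For $f=(f_0,f_1)$ and $\omega$, the play path $h=h(\omega,f_0,f_1)\in(\Omega\times\Delta(\Omega)\times\Delta(\Omega))^\infty$ is defined by $h^0=\emptyset$, $h^t=(h^{t-1},(\omega_t,f_0(h^{t-1}),f_1(h^{t-1})))$; $h^n$ is its prefix of length $n$ and $h_n$ its suffix of coordinates indexed by $t\ge n$. The induced measures satisfy $P_i^f(\omega^t)=\prod_{n=1}^t f_i(h^{n-1})[\omega_n]$. A comparison test is a function $T:\Omega^\infty\times F\times F\to\{0,\tfrac12,1\}$, measurable in $\omega$ for each fixed pair; $\{T(\cdot,f)=k\}=\{\omega:T(\omega,f_0,f_1)=k\}$.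 $T$ is anonymous if $T(\omega,f_0,f_1)=1-T(\omega,f_1,f_0)$ always. $T$ is non-counterfactual if there is $\hat T$ on $(\Omega\times\Delta(\Omega)\times\Delta(\Omega))^\infty$ with $T(\omega,f_0,f_1)=\hat T(h(\omega,f_0,f_1))$. $T$ is reasonable if for all $f$, $i\in\{0,1\}$ and measurable $A$: $P_i^f(A)>0$ and $P_{1-i}^f(A)=0$ imply $P_i^f(A\cap\{T(\cdot,f)=i\})>0$. Two triplets $(\omega,f_0,f_1),(\tilde\omega,\tilde f_0,\tilde f_1)$ eventually coincide if there exists $n>1$ such that $h_n(\omega,f_0,f_1)=h_n(\tilde\omega,\tilde f_0,\tilde f_1)$ and for all $1\le t\le n-1$, $i\in\{0,1\}$: $f_i(h^{t-1}(\omega,f_0,f_1))[\omega_t]>0$ and $\tilde f_i(h^{t-1}(\tilde\omega,\tilde f_0,\tilde f_1))[\tilde\omega_t]>0$. $T$ is a tail test if it takes equal values on any two triplets that eventually coincide. $T\sim\hat T$ means: for every pair $f$ and $i\in\{0,1\}$, $P_i^f(\{\omega:T(\omega,f_0,f_1)\ne\hat T(\omega,f_0,f_1)\})=0$. Likelihood ratios along $h=h(\omega,f_0,f_1)$: $D^t_{f_0}f_1(\omega)=\prod_{n=1}^t \frac{f_1(h^{n-1})[\omega_n]}{f_0(h^{n-1})[\omega_n]}$, $D^t_{f_1}f_0(\omega)=\prod_{n=1}^t \frac{f_0(h^{n-1})[\omega_n]}{f_1(h^{n-1})[\omega_n]}$. For $(j,k)\in\{(0,1),(1,0)\}$, $\overline{D}_{f_j}f_k=\limsup_t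 D^t_{f_j}f_k$, $\underline{D}_{f_j}f_k=\liminf_t D^t_{f_j}f_k$ if $f_j(h^{n-1})[\omega_n]>0$ for all $n$, and both $=+\infty$ otherwise; if they coincide and are finite the common value is the derivative $D_{f_j}f_k(\omega)$. The derivative test: $\mathcal{D}(\omega,f_0,f_1)=1$ if $D_{f_1}f_0(\omega)$ exists and equals $0$; $=0$ if $D_{f_0}f_1(\omega)$ exists and equals $0$; $=\tfrac12$ otherwise. *)

theory Defs
  imports "HOL-Probability.Probability"
begin

text \<open>Outcomes Omega = {0,1} are rendered as bool (False = 0, True = 1);
  Delta(Omega) is bool pmf; infinite sequences are nat \<Rightarrow> bool with
  omega_1 = w 0 (0-indexed). A history is a list of triples
  (outcome, forecast of expert 0, forecast of expert 1), oldest first.\<close>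

type_synonym hist_elem = "bool \<times> bool pmf \<times> bool pmf"
type_synonym fstrat = "hist_elem list \<Rightarrow> bool pmf"

definition sel :: "fstrat \<Rightarrow> fstrat \<Rightarrow> nat \<Rightarrow> fstrat" where
  "sel f0 f1 i = (if i = 0 then f0 else f1)"

fun hist :: "(nat \<Rightarrow> bool) \<Rightarrow> fstrat \<Rightarrow> fstrat \<Rightarrow> nat \<Rightarrow> hist_elem list" where
  "hist w f0 f1 0 = []"
| "hist w f0 f1 (Suc t) =
     hist w f0 f1 t @ [(w t, f0 (hist w f0 f1 t), f1 (hist w f0 f1 t))]"

text \<open>The full play path h(w,f0,f1) as an infinite sequence; path k is the
  coordinate with (1-based) index k+1.\<close>
definition path :: "(nat \<Rightarrow> bool) \<Rightarrow> fstrat \<Rightarrow> fstrat \<Rightarrow> nat \<Rightarrow> hist_elem" where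
  "path w f0 f1 k = (w k, f0 (hist w f0 f1 k), f1 (hist w f0 f1 k))"

definition Omega_inf :: "(nat \<Rightarrow> bool) measure" where
  "Omega_inf = PiM UNIV (\<lambda>_. count_space UNIV)"

definition cyl :: "(nat \<Rightarrow> bool) \<Rightarrow> nat \<Rightarrow> (nat \<Rightarrow> bool) set" where
  "cyl w t = {v. \<forall>n<t. v n = w n}"

definition induced :: "fstrat \<Rightarrow> fstrat \<Rightarrow> nat \<Rightarrow> (nat \<Rightarrow> bool) measure" where
  "induced f0 f1 i = (SOME M. prob_space M \<and> sets M = sets Omega_inf \<and>
     (\<forall>w t. emeasure M (cyl w t) =
        ennreal (\<Prod>n<t. pmf (sel f0 f1 i (hist w f0 f1 n)) (w n))))"

definition comparison_test :: "((nat \<Rightarrow> bool) \<Rightarrow> fstrat \<Rightarrow> fstrat \<Rightarrow> real) \<Rightarrow> bool" where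
  "comparison_test T \<longleftrightarrow>
     (\<forall>w f0 f1. T w f0 f1 \<in> {0, 1/2, 1}) \<and>
     (\<forall>f0 f1. (\<lambda>w. T w f0 f1) \<in> borel_measurable Omega_inf)"

definition anonymous :: "((nat \<Rightarrow> bool) \<Rightarrow> fstrat \<Rightarrow> fstrat \<Rightarrow> real) \<Rightarrow> bool" where
  "anonymous T \<longleftrightarrow> (\<forall>w f0 f1. T w f0 f1 = 1 - T w f1 f0)"

definition non_counterfactual :: "((nat \<Rightarrow> bool) \<Rightarrow> fstrat \<Rightarrow> fstrat \<Rightarrow> real) \<Rightarrow> bool" where
  "non_counterfactual T \<longleftrightarrow>
     (\<exists>That :: (nat \<Rightarrow> hist_elem) \<Rightarrow> real. \<forall>w f0 f1. T w f0 f1 = That (path w f0 f1))"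

definition reasonable :: "((nat \<Rightarrow> bool) \<Rightarrow> fstrat \<Rightarrow> fstrat \<Rightarrow> real) \<Rightarrow> bool" where
  "reasonable T \<longleftrightarrow>
     (\<forall>f0 f1 i A. i \<in> {0, 1} \<longrightarrow> A \<in> sets Omega_inf \<longrightarrow>
        measure (induced f0 f1 i) A > 0 \<longrightarrow> measure (induced f0 f1 (1 - i)) A = 0 \<longrightarrow>
        measure (induced f0 f1 i) (A \<inter> {w. T w f0 f1 = real i}) > 0)"

text \<open>Eventual coincidence, with the paper's 1-based index n > 1: the suffix
  h_n consists of the 0-based coordinates k \<ge> n - 1, and the positivity
  condition for 1 \<le> t \<le> n-1 concerns the 0-based steps k < n - 1.\<close>
definition eventually_coincide ::
  "(nat \<Rightarrow> bool) \<Rightarrow> fstrat \<Rightarrow> fstrat \<Rightarrow> (nat \<Rightarrow> bool) \<Rightarrow> fstrat \<Rightarrow> fstrat \<Rightarrow> bool" where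
  "eventually_coincide w f0 f1 v g0 g1 \<longleftrightarrow>
     (\<exists>n::nat. n > 1 \<and>
        (\<forall>k\<ge>n - 1. path w f0 f1 k = path v g0 g1 k) \<and>
        (\<forall>k<n - 1. \<forall>i\<in>{0::nat, 1}.
            pmf (sel f0 f1 i (hist w f0 f1 k)) (w k) > 0 \<and>
            pmf (sel g0 g1 i (hist v g0 g1 k)) (v k) > 0))"

definition tail_test :: "((nat \<Rightarrow> bool) \<Rightarrow> fstrat \<Rightarrow> fstrat \<Rightarrow> real) \<Rightarrow> bool" where
  "tail_test T \<longleftrightarrow>
     (\<forall>w f0 f1 v g0 g1. eventually_coincide w f0 f1 v g0 g1 \<longrightarrow> T w f0 f1 = T v g0 g1)"

definition test_equiv ::
  "((nat \<Rightarrow> bool) \<Rightarrow> fstrat \<Rightarrow> fstrat \<Rightarrow> real) \<Rightarrow> ((nat \<Rightarrow> bool) \<Rightarrow> fstrat \<Rightarrow> fstrat \<Rightarrow> real) \<Rightarrow> bool" where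
  "test_equiv T T' \<longleftrightarrow>
     (\<forall>f0 f1 i. i \<in> {0::nat, 1} \<longrightarrow> (AE w in induced f0 f1 i. T w f0 f1 = T' w f0 f1))"

definition lr :: "fstrat \<Rightarrow> fstrat \<Rightarrow> nat \<Rightarrow> (nat \<Rightarrow> bool) \<Rightarrow> nat \<Rightarrow> real" where
  "lr f0 f1 j w t = (\<Prod>n<t. pmf (sel f0 f1 (1 - j) (hist w f0 f1 n)) (w n)
                         / pmf (sel f0 f1 j (hist w f0 f1 n)) (w n))"

definition lr_pos :: "fstrat \<Rightarrow> fstrat \<Rightarrow> nat \<Rightarrow> (nat \<Rightarrow> bool) \<Rightarrow> bool" where
  "lr_pos f0 f1 j w \<longleftrightarrow> (\<forall>n. pmf (sel f0 f1 j (hist w f0 f1 n)) (w n) > 0)"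

definition upper_D :: "fstrat \<Rightarrow> fstrat \<Rightarrow> nat \<Rightarrow> (nat \<Rightarrow> bool) \<Rightarrow> ereal" where
  "upper_D f0 f1 j w = (if lr_pos f0 f1 j w then limsup (\<lambda>t. ereal (lr f0 f1 j w t)) else \<infinity>)"

definition lower_D :: "fstrat \<Rightarrow> fstrat \<Rightarrow> nat \<Rightarrow> (nat \<Rightarrow> bool) \<Rightarrow> ereal" where
  "lower_D f0 f1 j w = (if lr_pos f0 f1 j w then liminf (\<lambda>t. ereal (lr f0 f1 j w t)) else \<infinity>)"

definition D_exists_zero :: "fstrat \<Rightarrow> fstrat \<Rightarrow> nat \<Rightarrow> (nat \<Rightarrow> bool) \<Rightarrow> bool" where
  "D_exists_zero f0 f1 j w \<longleftrightarrow>
     upper_D f0 f1 j w = lower_D f0 f1 j w \<and> \<bar>upper_D f0 f1 j w\<bar> \<noteq> \<infinity> \<and>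
     upper_D f0 f1 j w = 0"

definition deriv_test :: "(nat \<Rightarrow> bool) \<Rightarrow> fstrat \<Rightarrow> fstrat \<Rightarrow> real" where
  "deriv_test w f0 f1 =
     (if D_exists_zero f0 f1 1 w then 1
      else if D_exists_zero f0 f1 0 w then 0
      else 1/2)"

end

theory Submission
  imports Defs
begin

definition pre :: "(nat \<Rightarrow> bool) \<Rightarrow> nat \<Rightarrow> bool list" where "pre w s = map w [0..<s]"

lemma length_pre[simp]: "length (pre w s) = s" by (simp add: pre_def)

lemma pre_eq_iff: "pre v s = pre w s \<longleftrightarrow> (\<forall>n<s. v n = w n)"
  unfolding pre_def map_eq_conv by auto

lemma cyl_pre: "cyl w s = {v. pre v s = pre w s}"
  by (auto simp: cyl_def pre_eq_iff)

lemma length_hist[simp]: "length (hist w f0 f1 n) = n"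
  by (induction n) auto

lemma hist_dep: "(\<forall>m<n. v m = w m) \<Longrightarrow> hist v f0 f1 n = hist w f0 f1 n"
  by (induction n) auto

lemma hist_prefix: "take n (hist w f0 f1 (n+m)) = hist w f0 f1 n"
  by (induction m) auto

definition det :: "nat \<Rightarrow> (nat \<Rightarrow> bool) set \<Rightarrow> bool" where
  "det s F \<longleftrightarrow> (\<forall>v w. (\<forall>n<s. v n = w n) \<longrightarrow> (v \<in> F \<longleftrightarrow> w \<in> F))"

lemma space_Omega[simp]: "space Omega_inf = UNIV"
  by (simp add: Omega_inf_def space_PiM)

lemma sets_Omega: "sets Omega_inf = sigma_sets UNIV (prod_algebra UNIV (\<lambda>_. count_space UNIV))"
  unfolding Omega_inf_def by (simp add: sets_PiM)

lemma coord_meas: "{v. v n = b} \<in> sets Omega_inf"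
proof -
  have "(\<lambda>v. v n) \<in> measurable Omega_inf (count_space UNIV)"
    unfolding Omega_inf_def by (rule measurable_component_singleton) simp
  then have "(\<lambda>v. v n) -` {b} \<inter> space Omega_inf \<in> sets Omega_inf"
    by (rule measurable_sets) simp
  then show ?thesis by (simp add: vimage_def)
qed

lemma pre_set_meas: "{v. pre v s = l} \<in> sets Omega_inf"
proof (cases "length l = s")
  case True
  show ?thesis
  proof (cases "s = 0")
    case z: True
    then have "{v. pre v s = l} = space Omega_inf" using True by (auto simp: pre_def)
    then show ?thesis by (metis sets.top)
  next
    case False
    have "{v. pre v s = l} = (\<Inter>n\<in>{..<s}. {v. v n = l ! n})"
      using True by (auto simp: pre_def list_eq_iff_nth_eq)
    also have "\<dots> \<in> sets Omega_inf"
      using False by (intro sets.finite_INT) (auto simp: coord_meas)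
    finally show ?thesis .
  qed
next
  case False
  then have "{v. pre v s = l} = {}" by auto
  then show ?thesis by simp
qed

lemma cyl_meas[simp]: "cyl w s \<in> sets Omega_inf"
  unfolding cyl_pre by (rule pre_set_meas)

lemma det_finite_pre: "finite ((\<lambda>w. pre w s) ` F)"
  by (rule finite_subset[OF _ finite_lists_length_eq[of "UNIV::bool set" s]]) auto

lemma det_Union: "det s F \<Longrightarrow> F = (\<Union>l\<in>(\<lambda>w. pre w s) ` F. {v. pre v s = l})"
  unfolding det_def by (auto simp: pre_eq_iff)

lemma det_meas: "det s F \<Longrightarrow> F \<in> sets Omega_inf"
  apply (subst det_Union, assumption)
  apply (rule sets.finite_UN)
  using det_finite_pre pre_set_meas by auto

lemma det_measure_sum:
  assumes "finite_measure M" "sets M = sets Omega_inf" "B \<in> sets Omega_inf" "det s F"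
  shows "measure M (B \<inter> F) = (\<Sum>l\<in>(\<lambda>w. pre w s) ` F. measure M (B \<inter> {v. pre v s = l}))"
proof -
  interpret finite_measure M by fact
  have "B \<inter> F = (\<Union>l\<in>(\<lambda>w. pre w s) ` F. B \<inter> {v. pre v s = l})"
    using det_Union[OF assms(4)] by blast
  also have "measure M \<dots> = (\<Sum>l\<in>(\<lambda>w. pre w s) ` F. measure M (B \<inter> {v. pre v s = l}))"
  proof (rule finite_measure_finite_Union)
    show "finite ((\<lambda>w. pre w s) ` F)" by (rule det_finite_pre)
    show "(\<lambda>l. B \<inter> {v. pre v s = l}) ` (\<lambda>w. pre w s) ` F \<subseteq> sets M"
      using assms(2,3) pre_set_meas by auto
    show "disjoint_family_on (\<lambda>l. B \<inter> {v. pre v s = l}) ((\<lambda>w. pre w s) ` F)"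
      unfolding disjoint_family_on_def by auto
  qed
  finally show ?thesis .
qed

lemma ext_ineq:
  assumes M1: "finite_measure M1" "sets M1 = sets Omega_inf"
    and M2: "finite_measure M2" "sets M2 = sets Omega_inf"
    and B1: "B1 \<in> sets Omega_inf" and B2: "B2 \<in> sets Omega_inf"
    and Qdet: "\<And>s v w. (\<forall>n<s. v n = w n) \<Longrightarrow> Q v s = Q w s"
    and cy: "\<And>w s. Q w s \<Longrightarrow> c1 * measure M1 (B1 \<inter> cyl w s) \<le> c2 * measure M2 (B2 \<inter> cyl w s)"
  shows "c1 * measure M1 (B1 \<inter> {w. \<exists>s. Q w s}) \<le> c2 * measure M2 (B2 \<inter> {w. \<exists>s. Q w s})"
proof -
  define F where "F s = {w. Q w s \<and> (\<forall>s'<s. \<not> Q w s')}" for s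
  have detF: "det s (F s)" for s
    unfolding det_def F_def
  proof (intro allI impI)
    fix v w :: "nat \<Rightarrow> bool" assume a: "\<forall>n<s. v n = w n"
    have e: "Q v s' = Q w s'" if "s' \<le> s" for s'
    proof (rule Qdet)
      show "\<forall>n<s'. v n = w n" using a that by simp
    qed
    then show "(v \<in> {w. Q w s \<and> (\<forall>s'<s. \<not> Q w s')}) = (w \<in> {w. Q w s \<and> (\<forall>s'<s. \<not> Q w s')})"
      by (auto simp del: ex_simps)
  qed
  have disj: "disjoint_family F"
  proof (unfold disjoint_family_on_def, intro ballI impI)
    fix m n :: nat assume "m \<noteq> n"
    then consider "m < n" | "n < m" by linarith
    then show "F m \<inter> F n = {}" by cases (auto simp: F_def)
  qed
  have U: "{w. \<exists>s. Q w s} = (\<Union>s. F s)"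
  proof safe
    fix w s assume "Q w s"
    have "Q w (LEAST s. Q w s)" by (rule LeastI) fact
    moreover have "\<forall>s'<(LEAST s. Q w s). \<not> Q w s'" by (blast dest: not_less_Least)
    ultimately have "w \<in> F (LEAST s. Q w s)" unfolding F_def by blast
    then show "w \<in> (\<Union>s. F s)" by blast
  qed (auto simp: F_def)
  have sm: "(\<lambda>s. measure M (B \<inter> F s)) sums measure M (B \<inter> {w. \<exists>s. Q w s})"
    if "finite_measure M" "sets M = sets Omega_inf" "B \<in> sets Omega_inf" for M B
  proof -
    interpret finite_measure M by fact
    have "(\<lambda>s. measure M (B \<inter> F s)) sums measure M (\<Union>s. B \<inter> F s)"
    proof (rule finite_measure_UNION)
      show "range (\<lambda>s. B \<inter> F s) \<subseteq> sets M" using that detF det_meas by auto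
      show "disjoint_family (\<lambda>s. B \<inter> F s)" using disj by (rule disjoint_family_on_bisimulation) auto
    qed
    then show ?thesis by (simp add: U)
  qed
  have le: "c1 * measure M1 (B1 \<inter> F s) \<le> c2 * measure M2 (B2 \<inter> F s)" for s
  proof -
    have "c1 * measure M1 (B1 \<inter> F s) = (\<Sum>l\<in>(\<lambda>w. pre w s) ` F s. c1 * measure M1 (B1 \<inter> {v. pre v s = l}))"
      by (simp add: det_measure_sum[OF M1 B1 detF] sum_distrib_left)
    also have "\<dots> \<le> (\<Sum>l\<in>(\<lambda>w. pre w s) ` F s. c2 * measure M2 (B2 \<inter> {v. pre v s = l}))"
    proof (rule sum_mono)
      fix l assume "l \<in> (\<lambda>w. pre w s) ` F s"
      then obtain w where w: "w \<in> F s" "l = pre w s" by auto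
      then have "Q w s" by (simp add: F_def)
      from cy[OF this] show "c1 * measure M1 (B1 \<inter> {v. pre v s = l}) \<le> c2 * measure M2 (B2 \<inter> {v. pre v s = l})"
        by (simp add: w cyl_pre)
    qed
    also have "\<dots> = c2 * measure M2 (B2 \<inter> F s)"
      by (simp add: det_measure_sum[OF M2 B2 detF] sum_distrib_left)
    finally show ?thesis .
  qed
  have s1: "(\<lambda>s. c1 * measure M1 (B1 \<inter> F s)) sums (c1 * measure M1 (B1 \<inter> {w. \<exists>s. Q w s}))"
    by (intro sums_mult sm M1 B1)
  have s2: "(\<lambda>s. c2 * measure M2 (B2 \<inter> F s)) sums (c2 * measure M2 (B2 \<inter> {w. \<exists>s. Q w s}))"
    by (intro sums_mult sm M2 B2)
  show ?thesis
    by (rule sums_le[OF le s1 s2])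
qed



fun preX :: "(bool list \<Rightarrow> bool) \<Rightarrow> nat \<Rightarrow> bool list" where
  "preX y 0 = []"
| "preX y (Suc n) = preX y n @ [y (preX y n)]"

definition Xmap :: "(bool list \<Rightarrow> bool) \<Rightarrow> nat \<Rightarrow> bool" where
  "Xmap y n = y (preX y n)"

lemma pre_Suc: "pre w (Suc n) = pre w n @ [w n]"
  by (simp add: pre_def)

lemma pre_0[simp]: "pre w 0 = []"
  by (simp add: pre_def)

lemma preX_pre: "pre (Xmap y) n = preX y n"
  by (induction n) (simp_all add: pre_Suc Xmap_def)

lemma take_pre: "m \<le> n \<Longrightarrow> take m (pre w n) = pre w m"
  by (simp add: pre_def take_map)

lemma nth_pre: "m < n \<Longrightarrow> pre w n ! m = w m"
  by (simp add: pre_def)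

lemma preX_eq_iff: "preX y n = l \<longleftrightarrow> length l = n \<and> (\<forall>m<n. y (take m l) = l ! m)"
proof -
  have "preX y n = l \<longleftrightarrow> pre (Xmap y) n = l" by (simp add: preX_pre)
  also have "\<dots> \<longleftrightarrow> length l = n \<and> (\<forall>m<n. y (take m l) = l ! m)"
  proof
    assume l: "pre (Xmap y) n = l"
    show "length l = n \<and> (\<forall>m<n. y (take m l) = l ! m)"
    proof (intro conjI allI impI)
      show "length l = n" using l by auto
      fix m assume "m < n"
      then have "take m l = preX y m" "l ! m = Xmap y m"
        using l take_pre[of m n "Xmap y"] nth_pre[of m n "Xmap y"] by (auto simp: preX_pre)
      then show "y (take m l) = l ! m" by (simp add: Xmap_def)
    qed
  next
    assume a: "length l = n \<and> (\<forall>m<n. y (take m l) = l ! m)"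
    have "\<forall>m\<le>n. preX y m = take m l"
    proof (intro allI impI)
      fix m show "m \<le> n \<Longrightarrow> preX y m = take m l"
      proof (induction m)
        case (Suc m)
        then have "preX y m = take m l" by simp
        moreover have "y (take m l) = l ! m" using a Suc.prems by auto
        ultimately show ?case using a Suc.prems by (simp add: take_Suc_conv_app_nth)
      qed simp
    qed
    then show "pre (Xmap y) n = l" using a by (simp add: preX_pre)
  qed
  finally show ?thesis .
qed

definition ext :: "bool list \<Rightarrow> nat \<Rightarrow> bool" where
  "ext l = (\<lambda>n. if n < length l then l ! n else False)"

lemma pre_ext: "pre (ext l) (length l) = l"
  by (rule nth_equalityI) (auto simp: pre_def ext_def)

definition qk :: "fstrat \<Rightarrow> fstrat \<Rightarrow> nat \<Rightarrow> bool list \<Rightarrow> bool pmf" where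
  "qk f0 f1 k l = sel f0 f1 k (hist (ext l) f0 f1 (length l))"

lemma qk_pre: "qk f0 f1 k (pre w n) = sel f0 f1 k (hist w f0 f1 n)"
proof -
  have "hist (ext (pre w n)) f0 f1 n = hist w f0 f1 n"
    by (rule hist_dep) (simp add: ext_def nth_pre)
  then show ?thesis by (simp add: qk_def)
qed

definition Ymeas :: "fstrat \<Rightarrow> fstrat \<Rightarrow> nat \<Rightarrow> (bool list \<Rightarrow> bool) measure" where
  "Ymeas f0 f1 k = PiM UNIV (\<lambda>l. measure_pmf (qk f0 f1 k l))"

lemma Y_comp_meas: "(\<lambda>y. y l) \<in> measurable (Ymeas f0 f1 k) (count_space UNIV)"
proof -
  have "(\<lambda>y. y l) \<in> measurable (Ymeas f0 f1 k) (measure_pmf (qk f0 f1 k l))"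
    unfolding Ymeas_def by (rule measurable_component_singleton) simp
  moreover have "measurable (Ymeas f0 f1 k) (measure_pmf (qk f0 f1 k l)) = measurable (Ymeas f0 f1 k) (count_space UNIV)"
    by (rule measurable_cong_sets) (simp_all add: sets_measure_pmf_count_space)
  ultimately show ?thesis by simp
qed

lemma space_Y[simp]: "space (Ymeas f0 f1 k) = UNIV"
  unfolding Ymeas_def space_PiM space_measure_pmf by (rule PiE_UNIV)

lemma preX_vim: assumes a: "length l = n" shows "(\<lambda>y. preX y n) -` {l} \<inter> space (Ymeas f0 f1 k) = (\<Inter>m\<in>{..<n}. (\<lambda>y. y (take m l)) -` {l ! m} \<inter> space (Ymeas f0 f1 k))"
proof (rule set_eqI)
  fix y
  have "y \<in> (\<lambda>y. preX y n) -` {l} \<inter> space (Ymeas f0 f1 k) \<longleftrightarrow> preX y n = l" by simp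
  also have "\<dots> \<longleftrightarrow> (\<forall>m<n. y (take m l) = l ! m)" using a by (simp only: preX_eq_iff simp_thms)
  also have "\<dots> \<longleftrightarrow> y \<in> (\<Inter>m\<in>{..<n}. (\<lambda>y. y (take m l)) -` {l ! m} \<inter> space (Ymeas f0 f1 k))" by auto
  finally show "y \<in> (\<lambda>y. preX y n) -` {l} \<inter> space (Ymeas f0 f1 k) \<longleftrightarrow> y \<in> (\<Inter>m\<in>{..<n}. (\<lambda>y. y (take m l)) -` {l ! m} \<inter> space (Ymeas f0 f1 k))" .
qed
lemma preX_vim_empty: assumes "length l \<noteq> n" shows "(\<lambda>y. preX y n) -` {l} \<inter> space (Ymeas f0 f1 k) = {}"
proof -
  have "preX y n \<noteq> l" for y using assms by (simp only: preX_eq_iff simp_thms)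
  then show ?thesis by auto
qed

lemma preX_meas: "(\<lambda>y. preX y n) \<in> measurable (Ymeas f0 f1 k) (count_space UNIV)"
proof (subst measurable_count_space_eq2_countable, intro conjI ballI)
  fix l :: "bool list"
  show "(\<lambda>y. preX y n) -` {l} \<inter> space (Ymeas f0 f1 k) \<in> sets (Ymeas f0 f1 k)"
  proof (cases "length l = n")
    case True
    show ?thesis
    proof (cases "n = 0")
      case False
      show ?thesis unfolding preX_vim[OF True]
        using False by (intro sets.finite_INT measurable_sets[OF Y_comp_meas]) (simp_all add: lessThan_empty_iff)
    next
      case z: True
      have "(\<lambda>y. preX y n) -` {l} \<inter> space (Ymeas f0 f1 k) = space (Ymeas f0 f1 k)"
        using True z by auto
      then show ?thesis using sets.top[of "Ymeas f0 f1 k"] by simp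
    qed
  next
    case False
    then show ?thesis unfolding preX_vim_empty[OF False] by simp
  qed
qed simp

lemma Xmap_meas: "Xmap \<in> measurable (Ymeas f0 f1 k) Omega_inf"
proof -
  have "(\<lambda>y n. Xmap y n) \<in> measurable (Ymeas f0 f1 k) Omega_inf"
    unfolding Omega_inf_def
  proof (rule measurable_PiM_single')
    fix n :: nat
    show "(\<lambda>y. Xmap y n) \<in> measurable (Ymeas f0 f1 k) (count_space UNIV)"
      unfolding Xmap_def
      by (rule measurable_compose_countable'[where f="\<lambda>l y. y l" and g="\<lambda>y. preX y n" and I=UNIV])
         (auto intro: Y_comp_meas preX_meas)
  qed auto
  then show ?thesis by simp
qed

lemma prob_Y: "prob_space (Ymeas f0 f1 k)"
  unfolding Ymeas_def
  by (rule prob_space_PiM) (simp add: prob_space_measure_pmf)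

lemma emeasure_Y_cyl:
  "emeasure (Ymeas f0 f1 k) (Xmap -` cyl w t) =
     ennreal (\<Prod>n<t. pmf (sel f0 f1 k (hist w f0 f1 n)) (w n))"
proof -
  let ?J = "(\<lambda>n. pre w n) ` {..<t}"
  let ?A = "\<lambda>l. {w (length l)}"
  have inj: "inj_on (\<lambda>n. pre w n) {..<t}"
  proof (rule inj_onI)
    fix a b assume "pre w a = pre w b"
    then have "length (pre w a) = length (pre w b)" by simp
    then show "a = b" by simp
  qed
  have "Xmap -` cyl w t = prod_emb UNIV (\<lambda>l. measure_pmf (qk f0 f1 k l)) ?J (Pi\<^sub>E ?J ?A)"
  proof -
    have "y \<in> Xmap -` cyl w t \<longleftrightarrow> (\<forall>n<t. y (pre w n) = w n)" for y
    proof -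
      have "y \<in> Xmap -` cyl w t \<longleftrightarrow> pre (Xmap y) t = pre w t" by (simp add: cyl_pre)
      also have "\<dots> \<longleftrightarrow> preX y t = pre w t" by (simp add: preX_pre)
      also have "\<dots> \<longleftrightarrow> (\<forall>n<t. y (pre w n) = w n)"
        by (simp add: preX_eq_iff take_pre nth_pre)
      finally show ?thesis .
    qed
    then show ?thesis
      by (auto simp: prod_emb_def PiE_iff space_PiM)
  qed
  then have "emeasure (Ymeas f0 f1 k) (Xmap -` cyl w t) = (\<Prod>l\<in>?J. emeasure (measure_pmf (qk f0 f1 k l)) (?A l))"
    unfolding Ymeas_def
    by (simp only:) (rule emeasure_PiM_emb, auto simp: prob_space_measure_pmf)
  also have "\<dots> = (\<Prod>n<t. emeasure (measure_pmf (qk f0 f1 k (pre w n))) {w n})"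
    by (subst prod.reindex[OF inj]) simp
  also have "\<dots> = (\<Prod>n<t. ennreal (pmf (sel f0 f1 k (hist w f0 f1 n)) (w n)))"
    by (simp add: qk_pre emeasure_pmf_single)
  also have "\<dots> = ennreal (\<Prod>n<t. pmf (sel f0 f1 k (hist w f0 f1 n)) (w n))"
    by (simp add: prod_ennreal)
  finally show ?thesis .
qed

lemma induced_ex: "\<exists>M. prob_space M \<and> sets M = sets Omega_inf \<and>
     (\<forall>w t. emeasure M (cyl w t) =
        ennreal (\<Prod>n<t. pmf (sel f0 f1 i (hist w f0 f1 n)) (w n)))"
proof (intro exI conjI allI)
  let ?M = "distr (Ymeas f0 f1 i) Omega_inf Xmap"
  show "prob_space ?M"
    by (rule prob_space.prob_space_distr[OF prob_Y Xmap_meas])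
  show "sets ?M = sets Omega_inf" by simp
  fix w t
  show "emeasure ?M (cyl w t) = ennreal (\<Prod>n<t. pmf (sel f0 f1 i (hist w f0 f1 n)) (w n))"
    using emeasure_Y_cyl[of f0 f1 i w t]
    by (subst emeasure_distr[OF Xmap_meas]) auto
qed

lemma induced_props:
  "prob_space (induced f0 f1 i)" "sets (induced f0 f1 i) = sets Omega_inf"
  "emeasure (induced f0 f1 i) (cyl w t) = ennreal (\<Prod>n<t. pmf (sel f0 f1 i (hist w f0 f1 n)) (w n))"
  using someI_ex[OF induced_ex[of f0 f1 i]] unfolding induced_def[symmetric] by auto

lemma induced_cyl:
  "measure (induced f0 f1 i) (cyl w t) = (\<Prod>n<t. pmf (sel f0 f1 i (hist w f0 f1 n)) (w n))"
  using induced_props(3) by (simp add: measure_def prod_nonneg)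



definition posupto :: "fstrat \<Rightarrow> fstrat \<Rightarrow> nat \<Rightarrow> (nat \<Rightarrow> bool) \<Rightarrow> nat \<Rightarrow> bool" where
  "posupto f0 f1 j w s \<longleftrightarrow> (\<forall>n<s. pmf (sel f0 f1 j (hist w f0 f1 n)) (w n) > 0)"

lemma ratio_cyl:
  assumes "posupto f0 f1 j w s"
  shows "measure (induced f0 f1 (1 - j)) (cyl w s) = lr f0 f1 j w s * measure (induced f0 f1 j) (cyl w s)"
proof -
  have "lr f0 f1 j w s * measure (induced f0 f1 j) (cyl w s) =
     (\<Prod>n<s. pmf (sel f0 f1 (1 - j) (hist w f0 f1 n)) (w n) / pmf (sel f0 f1 j (hist w f0 f1 n)) (w n)
        * pmf (sel f0 f1 j (hist w f0 f1 n)) (w n))"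
    by (simp only: lr_def induced_cyl prod.distrib)
  also have "\<dots> = (\<Prod>n<s. pmf (sel f0 f1 (1 - j) (hist w f0 f1 n)) (w n))"
  proof (rule prod.cong)
    fix n assume "n \<in> {..<s}"
    then have "pmf (sel f0 f1 j (hist w f0 f1 n)) (w n) \<noteq> 0"
      using assms unfolding posupto_def by auto
    then show "pmf (sel f0 f1 (1 - j) (hist w f0 f1 n)) (w n) / pmf (sel f0 f1 j (hist w f0 f1 n)) (w n)
        * pmf (sel f0 f1 j (hist w f0 f1 n)) (w n) = pmf (sel f0 f1 (1 - j) (hist w f0 f1 n)) (w n)"
      by simp
  qed simp
  also have "\<dots> = measure (induced f0 f1 (1 - j)) (cyl w s)"
    by (simp add: induced_cyl)
  finally show ?thesis by simp
qed

lemma hist_dep_le: "(\<forall>m<s. v m = w m) \<Longrightarrow> n \<le> s \<Longrightarrow> hist v f0 f1 n = hist w f0 f1 n"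
  by (rule hist_dep) auto

lemma lr_dep: "(\<forall>m<s. v m = w m) \<Longrightarrow> lr f0 f1 j v s = lr f0 f1 j w s"
  unfolding lr_def by (rule prod.cong) (auto simp: hist_dep_le[of s v w])

lemma posupto_dep: "(\<forall>m<s. v m = w m) \<Longrightarrow> posupto f0 f1 j v s = posupto f0 f1 j w s"
  unfolding posupto_def by (auto simp: hist_dep_le[of s v w])

lemma induced_finite: "finite_measure (induced f0 f1 i)"
  using induced_props(1)[of f0 f1 i] unfolding prob_space_def by blast

lemma prod_algebra_det:
  assumes "X \<in> prod_algebra UNIV (\<lambda>_::nat. count_space (UNIV::bool set))"
  shows "\<exists>s. det s X"
proof -
  obtain J E where X: "X = prod_emb UNIV (\<lambda>_. count_space UNIV) J (\<Pi>\<^sub>E j\<in>J. E j)" "finite J"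
    using prod_algebraE[OF assms] by metis
  obtain s where s: "\<forall>j\<in>J. j < s" using X(2) finite_nat_bounded by (auto simp: subset_eq)
  have mem: "v \<in> X \<longleftrightarrow> (\<forall>j\<in>J. v j \<in> E j)" for v
    by (simp add: X(1) prod_emb_def PiE_iff)
  have "det s X"
    unfolding det_def using s by (auto simp: mem)
  then show ?thesis by blast
qed

lemma cyl_unique:
  assumes M1: "finite_measure M1" "sets M1 = sets Omega_inf"
    and M2: "finite_measure M2" "sets M2 = sets Omega_inf"
    and eq: "\<And>w t. emeasure M1 (cyl w t) = emeasure M2 (cyl w t)"
  shows "M1 = M2"
proof (rule measure_eqI_generator_eq[where E="prod_algebra UNIV (\<lambda>_::nat. count_space (UNIV::bool set))"
      and \<Omega>=UNIV and A="\<lambda>_. UNIV"])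
  show "Int_stable (prod_algebra UNIV (\<lambda>_::nat. count_space (UNIV::bool set)))"
    by (rule Int_stable_prod_algebra)
  show "prod_algebra UNIV (\<lambda>_::nat. count_space (UNIV::bool set)) \<subseteq> Pow UNIV" by simp
  show "sets M1 = sigma_sets UNIV (prod_algebra UNIV (\<lambda>_. count_space UNIV))"
    using M1(2) sets_Omega by simp
  show "sets M2 = sigma_sets UNIV (prod_algebra UNIV (\<lambda>_. count_space UNIV))"
    using M2(2) sets_Omega by simp
  show "range (\<lambda>_. UNIV) \<subseteq> prod_algebra UNIV (\<lambda>_::nat. count_space (UNIV::bool set))"
    using space_in_prod_algebra[of UNIV "\<lambda>_::nat. count_space (UNIV::bool set)"] by simp
  show "(\<Union>i::nat. UNIV) = (UNIV :: (nat \<Rightarrow> bool) set)" by simp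
  show "emeasure M1 UNIV \<noteq> \<infinity>" for i :: nat
    using finite_measure.emeasure_finite[OF M1(1)] by simp
  fix X assume "X \<in> prod_algebra UNIV (\<lambda>_::nat. count_space (UNIV::bool set))"
  then obtain s where d: "det s X" using prod_algebra_det by blast
  have m: "measure M1 (cyl w t) = measure M2 (cyl w t)" for w t
    using eq[of w t] by (simp add: measure_def)
  have "measure M1 (UNIV \<inter> X) = measure M2 (UNIV \<inter> X)"
    unfolding det_measure_sum[OF M1 sets.top[of Omega_inf, simplified] d]
      det_measure_sum[OF M2 sets.top[of Omega_inf, simplified] d]
  proof (rule sum.cong)
    fix l assume "l \<in> (\<lambda>w. pre w s) ` X"
    then obtain w where "l = pre w s" by auto
    then show "measure M1 (UNIV \<inter> {v. pre v s = l}) = measure M2 (UNIV \<inter> {v. pre v s = l})"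
      using m[of w s] by (simp add: cyl_pre)
  qed simp
  then show "emeasure M1 X = emeasure M2 X"
    using finite_measure.emeasure_eq_measure[OF M1(1)] finite_measure.emeasure_eq_measure[OF M2(1)]
    by simp
qed



definition opn :: "(nat \<Rightarrow> bool) set \<Rightarrow> bool" where
  "opn U \<longleftrightarrow> (\<exists>L. U = {w. \<exists>s. pre w s \<in> L})"

lemma det_pre_in: "det s {w. pre w s \<in> L}"
  unfolding det_def by (simp add: pre_eq_iff[symmetric])

lemma opn_meas: "opn U \<Longrightarrow> U \<in> sets Omega_inf"
proof -
  assume "opn U"
  then obtain L where U: "U = {w. \<exists>s. pre w s \<in> L}" by (auto simp: opn_def)
  have "U = (\<Union>s. {w. pre w s \<in> L})" by (auto simp: U)
  also have "\<dots> \<in> sets Omega_inf"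
    by (intro sets.countable_nat_UN) (auto intro: det_meas det_pre_in)
  finally show ?thesis .
qed

lemma det_opn: assumes "det s F" shows "opn F"
proof -
  have "F = {w. \<exists>s'. pre w s' \<in> (\<lambda>w. pre w s) ` F}"
  proof safe
    fix w assume "w \<in> F" then show "\<exists>s'. pre w s' \<in> (\<lambda>w. pre w s) ` F" by blast
  next
    fix w s' u assume "pre w s' = pre u s" "u \<in> F"
    then have "length (pre w s') = length (pre u s)" by simp
    then have "s' = s" by simp
    then have "\<forall>n<s. w n = u n" using \<open>pre w s' = pre u s\<close> pre_eq_iff by simp
    then have "w \<in> F \<longleftrightarrow> u \<in> F" using assms unfolding det_def by simp
    then show "w \<in> F" using \<open>u \<in> F\<close> by simp
  qed
  then show ?thesis unfolding opn_def by blast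
qed

lemma det_compl: "det s F \<Longrightarrow> det s (- F)"
  unfolding det_def by blast

lemma opn_empty: "opn {}"
  unfolding opn_def by (rule exI[of _ "{}"]) simp

lemma opn_UNIV: "opn UNIV"
  unfolding opn_def by (rule exI[of _ "{[]}"]) (auto intro: exI[of _ 0])

lemma take_pre': "take m (pre w n) = pre w (min m n)"
  by (simp add: pre_def take_map min_def)

lemma opn_Int: assumes "opn U" "opn V" shows "opn (U \<inter> V)"
proof -
  obtain L1 L2 where U: "U = {w. \<exists>s. pre w s \<in> L1}" and V: "V = {w. \<exists>s. pre w s \<in> L2}"
    using assms by (auto simp: opn_def)
  let ?L = "{l. (\<exists>s1\<le>length l. take s1 l \<in> L1) \<and> (\<exists>s2\<le>length l. take s2 l \<in> L2)}"
  have "U \<inter> V = {w. \<exists>s. pre w s \<in> ?L}"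
  proof (rule set_eqI)
    fix w
    show "w \<in> U \<inter> V \<longleftrightarrow> w \<in> {w. \<exists>s. pre w s \<in> ?L}"
    proof
      assume "w \<in> U \<inter> V"
      then obtain s1 s2 where "pre w s1 \<in> L1" "pre w s2 \<in> L2" by (auto simp: U V)
      have t1: "take s1 (pre w (max s1 s2)) = pre w s1" and t2: "take s2 (pre w (max s1 s2)) = pre w s2"
        by (simp_all add: take_pre')
      have e1: "\<exists>s1'\<le>length (pre w (max s1 s2)). take s1' (pre w (max s1 s2)) \<in> L1"
        using t1 \<open>pre w s1 \<in> L1\<close> by (intro exI[where x=s1]) simp
      have e2: "\<exists>s2'\<le>length (pre w (max s1 s2)). take s2' (pre w (max s1 s2)) \<in> L2"
        using t2 \<open>pre w s2 \<in> L2\<close> by (intro exI[where x=s2]) simp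
      from e1 e2 have "pre w (max s1 s2) \<in> ?L" by blast
      then show "w \<in> {w. \<exists>s. pre w s \<in> ?L}" by blast
    next
      assume "w \<in> {w. \<exists>s. pre w s \<in> ?L}"
      then obtain s s1 s2 where "s1 \<le> length (pre w s)" "take s1 (pre w s) \<in> L1"
         "s2 \<le> length (pre w s)" "take s2 (pre w s) \<in> L2" by blast
      then have "pre w s1 \<in> L1" "pre w s2 \<in> L2" by (simp_all add: take_pre' min_absorb1)
      then show "w \<in> U \<inter> V" by (auto simp: U V)
    qed
  qed
  then show ?thesis unfolding opn_def by blast
qed

lemma opn_UN: assumes "\<And>n::nat. opn (U n)" shows "opn (\<Union>n. U n)"
proof -
  have "\<forall>n. \<exists>L. U n = {w. \<exists>s. pre w s \<in> L}" using assms by (auto simp: opn_def)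
  then obtain L where L: "\<And>n. U n = {w. \<exists>s. pre w s \<in> L n}" by metis
  have "(\<Union>n. U n) = {w. \<exists>s. pre w s \<in> (\<Union>n. L n)}" by (auto simp: L)
  then show ?thesis unfolding opn_def by blast
qed

lemma opn_INT: fixes V :: "nat \<Rightarrow> (nat \<Rightarrow> bool) set" and N :: nat
  shows "(\<And>n. n < N \<Longrightarrow> opn (V n)) \<Longrightarrow> opn (\<Inter>n\<in>{..<N}. V n)"
proof (induction N)
  case 0 then show ?case by (simp add: opn_UNIV)
next
  case (Suc N)
  have "(\<Inter>n\<in>{..<Suc N}. V n) = (\<Inter>n\<in>{..<N}. V n) \<inter> V N"
    by (auto simp: lessThan_Suc)
  then show ?case using Suc by (simp add: opn_Int)
qed

lemma sets_Omega_sigma: "S \<in> sets Omega_inf \<longleftrightarrow> S \<in> sigma_sets UNIV (prod_algebra UNIV (\<lambda>_::nat. count_space (UNIV::bool set)))"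
  using sets_Omega by simp

lemma regular:
  assumes P: "prob_space P" "sets P = sets Omega_inf" and S: "S \<in> sets Omega_inf"
  shows "\<forall>d>0. \<exists>U V. opn U \<and> opn V \<and> S \<subseteq> U \<and> - S \<subseteq> V \<and> measure P (U \<inter> V) < d"
proof -
  have cl: "prod_algebra UNIV (\<lambda>_::nat. count_space (UNIV::bool set)) \<subseteq> Pow UNIV" by simp
  from Int_stable_prod_algebra cl S[unfolded sets_Omega_sigma] show ?thesis
proof (induction rule: sigma_sets_induct_disjoint)
  case (basic A)
  then obtain s where d: "det s A" using prod_algebra_det by blast
  show ?case
  proof (intro allI impI exI conjI)
    show "opn A" by (rule det_opn[OF d])
    show "opn (- A)" by (rule det_opn[OF det_compl[OF d]])
  qed auto
next
  case empty
  show ?case by (intro allI impI exI[of _ "{}"] exI[of _ UNIV]) (auto simp: opn_empty opn_UNIV)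
next
  case (compl A)
  show ?case
  proof (intro allI impI)
    fix d :: real assume "d > 0"
    then obtain U V where "opn U" "opn V" "A \<subseteq> U" "- A \<subseteq> V" "measure P (U \<inter> V) < d"
      using compl.IH by blast
    then show "\<exists>U V. opn U \<and> opn V \<and> UNIV - A \<subseteq> U \<and> - (UNIV - A) \<subseteq> V \<and> measure P (U \<inter> V) < d"
      by (intro exI[of _ V] exI[of _ U]) (auto simp: Int_commute)
  qed
next
  case (union A)
  interpret prob_space P by fact
  have Ameas: "A n \<in> sets P" for n
    using union.hyps(2) P(2) sets_Omega_sigma by auto
  show ?case
  proof (intro allI impI)
    fix d :: real assume d: "d > 0"
    have sA: "(\<lambda>n. measure P (A n)) sums measure P (\<Union>n. A n)"
      by (rule finite_measure_UNION) (use Ameas union.hyps(1) in auto)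
    obtain N where N: "norm (\<Sum>i. measure P (A (i + N))) < d / 4"
      using suminf_exist_split[of "d/4" "\<lambda>n. measure P (A n)"] sums_summable[OF sA] d by auto
    have "\<forall>n. \<exists>U V. opn U \<and> opn V \<and> A n \<subseteq> U \<and> - A n \<subseteq> V \<and> measure P (U \<inter> V) < d / 4 * (1/2) ^ n"
    proof
      fix n
      have p: "0 < d / 4 * (1/2::real) ^ n" using d by simp
      from union.IH[of n] p show "\<exists>U V. opn U \<and> opn V \<and> A n \<subseteq> U \<and> - A n \<subseteq> V \<and> measure P (U \<inter> V) < d / 4 * (1/2) ^ n"
        by blast
    qed
    then obtain U V where UV: "\<And>n. opn (U n)" "\<And>n. opn (V n)" "\<And>n. A n \<subseteq> U n" "\<And>n. - A n \<subseteq> V n"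
      "\<And>n. measure P (U n \<inter> V n) < d / 4 * (1/2) ^ n"
      by metis
    define U' where "U' = (\<Union>n. U n)"
    define V' where "V' = (\<Inter>n\<in>{..<N}. V n)"
    have oU: "opn U'" unfolding U'_def by (rule opn_UN[OF UV(1)])
    have oV: "opn V'" unfolding V'_def by (rule opn_INT[OF UV(2)])
    have sub1: "(\<Union>n. A n) \<subseteq> U'" using UV(3) unfolding U'_def by blast
    have sub2: "- (\<Union>n. A n) \<subseteq> V'" using UV(4) unfolding V'_def by blast
    have sub3: "U' \<inter> V' \<subseteq> (\<Union>n. U n \<inter> V n) \<union> (\<Union>i. A (i + N))"
    proof
      fix w assume w: "w \<in> U' \<inter> V'"
      then obtain n where n: "w \<in> U n" unfolding U'_def by blast
      show "w \<in> (\<Union>n. U n \<inter> V n) \<union> (\<Union>i. A (i + N))"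
      proof (cases "n < N")
        case True
        then have "w \<in> V n" using w unfolding V'_def by blast
        then show ?thesis using n by blast
      next
        case False
        then have nN: "n = (n - N) + N" by simp
        show ?thesis
        proof (cases "w \<in> A n")
          case True
          then have "w \<in> A ((n - N) + N)" using nN by simp
          then show ?thesis by blast
        next
          case False then have "w \<in> V n" using UV(4) by blast
          then show ?thesis using n by blast
        qed
      qed
    qed
    have mUV: "\<And>n. U n \<inter> V n \<in> sets P"
      using UV(1,2) opn_meas P(2) by auto
    have sumg: "summable (\<lambda>n. d / 4 * (1/2::real) ^ n)"
      by (intro summable_mult summable_geometric) simp
    have sumUV: "summable (\<lambda>n. measure P (U n \<inter> V n))"
      by (rule summable_comparison_test'[OF sumg]) (use UV(5) in \<open>auto intro: less_imp_le\<close>)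
    have "measure P (\<Union>n. U n \<inter> V n) \<le> (\<Sum>n. measure P (U n \<inter> V n))"
      by (rule finite_measure_subadditive_countably) (use mUV sumUV in auto)
    also have "\<dots> \<le> (\<Sum>n. d / 4 * (1/2::real) ^ n)"
      by (rule suminf_le[OF _ sumUV sumg]) (use UV(5) in \<open>auto intro: less_imp_le\<close>)
    also have "\<dots> = d / 4 * (\<Sum>n. (1/2::real) ^ n)"
      by (rule suminf_mult) (rule summable_geometric, simp)
    also have "\<dots> = d / 2"
      by (simp add: suminf_geometric)
    finally have b1: "measure P (\<Union>n. U n \<inter> V n) \<le> d / 2" .
    have sAN: "(\<lambda>i. measure P (A (i + N))) sums measure P (\<Union>i. A (i + N))"
    proof (rule finite_measure_UNION)
      show "range (\<lambda>i. A (i + N)) \<subseteq> sets P" using Ameas by auto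
      show "disjoint_family (\<lambda>i. A (i + N))"
        using union.hyps(1) unfolding disjoint_family_on_def by auto
    qed
    have b2: "measure P (\<Union>i. A (i + N)) < d / 4"
      using N sums_unique[OF sAN] by simp
    have "measure P (U' \<inter> V') \<le> measure P ((\<Union>n. U n \<inter> V n) \<union> (\<Union>i. A (i + N)))"
      by (rule finite_measure_mono[OF sub3]) (use mUV Ameas in auto)
    also have "\<dots> \<le> measure P (\<Union>n. U n \<inter> V n) + measure P (\<Union>i. A (i + N))"
      by (rule measure_Un_le) (use mUV Ameas in auto)
    finally have "measure P (U' \<inter> V') < d" using b1 b2 d by linarith
    then show "\<exists>U V. opn U \<and> opn V \<and> (\<Union>n. A n) \<subseteq> U \<and> - (\<Union>n. A n) \<subseteq> V \<and> measure P (U \<inter> V) < d"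
      using oU oV sub1 sub2 by blast
  qed
qed
qed

lemma regular_null:
  assumes P: "prob_space P" "sets P = sets Omega_inf" and S: "S \<in> sets Omega_inf"
    and "measure P S = 0" and "d > 0"
  shows "\<exists>U. opn U \<and> S \<subseteq> U \<and> measure P U < d"
proof -
  interpret prob_space P by fact
  obtain U V where UV: "opn U" "opn V" "S \<subseteq> U" "- S \<subseteq> V" "measure P (U \<inter> V) < d"
    using regular[OF P S] assms(5) by blast
  have "U \<subseteq> S \<union> (U \<inter> V)" using UV by blast
  then have "measure P U \<le> measure P (S \<union> (U \<inter> V))"
    by (rule finite_measure_mono) (use UV opn_meas P(2) S in auto)
  also have "\<dots> \<le> measure P S + measure P (U \<inter> V)"
    by (rule measure_Un_le) (use UV opn_meas P(2) S in auto)
  finally show ?thesis using UV assms(4) by auto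
qed



lemma induced_prob[simp]: "prob_space (induced f0 f1 i)" by (rule induced_props(1))
lemma induced_sets[simp]: "sets (induced f0 f1 i) = sets Omega_inf" by (rule induced_props(2))
lemma induced_meas_le1: "measure (induced f0 f1 i) A \<le> 1"
  by (rule prob_space.prob_le_1) simp
lemma induced_mono: "A \<subseteq> B \<Longrightarrow> B \<in> sets Omega_inf \<Longrightarrow> measure (induced f0 f1 i) A \<le> measure (induced f0 f1 i) B"
  by (rule finite_measure.finite_measure_mono[OF induced_finite]) simp_all

lemma R_ge:
  assumes Qdet: "\<And>s v w. (\<forall>n<s. v n = w n) \<Longrightarrow> Q v s = Q w s"
    and Q: "\<And>w s. Q w s \<Longrightarrow> posupto f0 f1 j w s \<and> lr f0 f1 j w s \<ge> b"
  shows "b * measure (induced f0 f1 j) {w. \<exists>s. Q w s} \<le> measure (induced f0 f1 (1 - j)) {w. \<exists>s. Q w s}"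
proof -
  have "b * measure (induced f0 f1 j) (UNIV \<inter> {w. \<exists>s. Q w s}) \<le> 1 * measure (induced f0 f1 (1 - j)) (UNIV \<inter> {w. \<exists>s. Q w s})"
  proof (rule ext_ineq[OF induced_finite induced_sets induced_finite induced_sets])
    show "UNIV \<in> sets Omega_inf" using sets.top[of Omega_inf] by simp
    show "UNIV \<in> sets Omega_inf" using sets.top[of Omega_inf] by simp
    show "Q v s = Q w s" if "\<forall>n<s. v n = w n" for s v w using Qdet that by blast
    fix w s assume "Q w s"
    then have p: "posupto f0 f1 j w s" and b: "lr f0 f1 j w s \<ge> b" using Q by auto
    have "b * measure (induced f0 f1 j) (cyl w s) \<le> lr f0 f1 j w s * measure (induced f0 f1 j) (cyl w s)"
      using b by (intro mult_right_mono) simp_all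
    also have "\<dots> = measure (induced f0 f1 (1 - j)) (cyl w s)" using ratio_cyl[OF p] by simp
    finally show "b * measure (induced f0 f1 j) (UNIV \<inter> cyl w s) \<le> 1 * measure (induced f0 f1 (1 - j)) (UNIV \<inter> cyl w s)"
      by simp
  qed
  then show ?thesis by simp
qed

lemma R_le:
  assumes Qdet: "\<And>s v w. (\<forall>n<s. v n = w n) \<Longrightarrow> Q v s = Q w s"
    and Q: "\<And>w s. Q w s \<Longrightarrow> posupto f0 f1 j w s \<and> lr f0 f1 j w s \<le> a"
  shows "measure (induced f0 f1 (1 - j)) {w. \<exists>s. Q w s} \<le> a * measure (induced f0 f1 j) {w. \<exists>s. Q w s}"
proof -
  have "1 * measure (induced f0 f1 (1 - j)) (UNIV \<inter> {w. \<exists>s. Q w s}) \<le> a * measure (induced f0 f1 j) (UNIV \<inter> {w. \<exists>s. Q w s})"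
  proof (rule ext_ineq[OF induced_finite induced_sets induced_finite induced_sets])
    show "UNIV \<in> sets Omega_inf" using sets.top[of Omega_inf] by simp
    show "UNIV \<in> sets Omega_inf" using sets.top[of Omega_inf] by simp
    show "Q v s = Q w s" if "\<forall>n<s. v n = w n" for s v w using Qdet that by blast
    fix w s assume "Q w s"
    then have p: "posupto f0 f1 j w s" and b: "lr f0 f1 j w s \<le> a" using Q by auto
    have "measure (induced f0 f1 (1 - j)) (cyl w s) = lr f0 f1 j w s * measure (induced f0 f1 j) (cyl w s)"
      using ratio_cyl[OF p] by simp
    also have "\<dots> \<le> a * measure (induced f0 f1 j) (cyl w s)"
      using b by (intro mult_right_mono) simp_all
    finally show "1 * measure (induced f0 f1 (1 - j)) (UNIV \<inter> cyl w s) \<le> a * measure (induced f0 f1 j) (UNIV \<inter> cyl w s)"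
      by simp
  qed
  then show ?thesis by simp
qed

definition Hset :: "fstrat \<Rightarrow> fstrat \<Rightarrow> nat \<Rightarrow> real \<Rightarrow> (nat \<Rightarrow> bool) set" where
  "Hset f0 f1 j a = {w. \<exists>s. posupto f0 f1 j w s \<and> lr f0 f1 j w s \<le> a}"

lemma Hdet: "(\<forall>n<s. v n = w n) \<Longrightarrow> (posupto f0 f1 j v s \<and> lr f0 f1 j v s \<le> a) = (posupto f0 f1 j w s \<and> lr f0 f1 j w s \<le> a)"
  using posupto_dep[of s v w] lr_dep[of s v w] by simp

lemma H_meas: "Hset f0 f1 j a \<in> sets Omega_inf"
proof -
  have "Hset f0 f1 j a = (\<Union>s. {w. posupto f0 f1 j w s \<and> lr f0 f1 j w s \<le> a})"
    by (auto simp: Hset_def)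
  also have "\<dots> \<in> sets Omega_inf"
  proof (intro sets.countable_nat_UN subsetI, clarify)
    fix s
    have "det s {w. posupto f0 f1 j w s \<and> lr f0 f1 j w s \<le> a}"
      unfolding det_def using Hdet by blast
    then show "{w. posupto f0 f1 j w s \<and> lr f0 f1 j w s \<le> a} \<in> sets Omega_inf" by (rule det_meas)
  qed
  finally show ?thesis .
qed

lemma H_small:
  assumes "a \<ge> 0" shows "measure (induced f0 f1 (1 - j)) (Hset f0 f1 j a) \<le> a"
proof -
  have "measure (induced f0 f1 (1 - j)) (Hset f0 f1 j a) \<le> a * measure (induced f0 f1 j) (Hset f0 f1 j a)"
    unfolding Hset_def by (rule R_le) (use Hdet in auto)
  also have "\<dots> \<le> a * 1" using assms induced_meas_le1 by (intro mult_left_mono) auto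
  finally show ?thesis by simp
qed

definition Zset :: "fstrat \<Rightarrow> fstrat \<Rightarrow> nat \<Rightarrow> (nat \<Rightarrow> bool) set" where
  "Zset f0 f1 j = (\<Inter>m. Hset f0 f1 j (1 / real (Suc m)))"

lemma Z_meas: "Zset f0 f1 j \<in> sets Omega_inf"
  unfolding Zset_def by (intro sets.countable_INT) (auto intro: H_meas)

lemma Z_null: "measure (induced f0 f1 (1 - j)) (Zset f0 f1 j) = 0"
proof -
  have le: "measure (induced f0 f1 (1 - j)) (Zset f0 f1 j) \<le> 1 / real (Suc m)" for m
  proof -
    have "measure (induced f0 f1 (1 - j)) (Zset f0 f1 j) \<le> measure (induced f0 f1 (1 - j)) (Hset f0 f1 j (1 / real (Suc m)))"
      by (rule induced_mono) (auto simp: Zset_def H_meas)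
    also have "\<dots> \<le> 1 / real (Suc m)" by (rule H_small) simp
    finally show ?thesis .
  qed
  have "measure (induced f0 f1 (1 - j)) (Zset f0 f1 j) \<le> 0"
  proof (rule ccontr)
    assume "\<not> ?thesis"
    then have pos: "measure (induced f0 f1 (1 - j)) (Zset f0 f1 j) > 0" by simp
    obtain m where "inverse (real (Suc m)) < measure (induced f0 f1 (1 - j)) (Zset f0 f1 j)"
      using reals_Archimedean[OF pos] by blast
    then show False using le[of m] by (simp add: inverse_eq_divide)
  qed
  then show ?thesis using measure_nonneg[of "induced f0 f1 (1 - j)" "Zset f0 f1 j"] by linarith
qed

lemma Z_contains:
  assumes "lr_pos f0 f1 j w" "(\<lambda>t. lr f0 f1 j w t) \<longlonglongrightarrow> 0"
  shows "w \<in> Zset f0 f1 j"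
proof -
  have "w \<in> Hset f0 f1 j (1 / real (Suc m))" for m
  proof -
    have "eventually (\<lambda>t. norm (lr f0 f1 j w t - 0) < 1 / real (Suc m)) sequentially"
      using assms(2) unfolding tendsto_iff dist_norm by simp
    then obtain t where t: "norm (lr f0 f1 j w t) < 1 / real (Suc m)"
      unfolding eventually_sequentially by auto
    have "posupto f0 f1 j w t" using assms(1) by (simp add: posupto_def lr_pos_def)
    moreover have "lr f0 f1 j w t \<le> 1 / real (Suc m)" using t by simp
    ultimately show ?thesis unfolding Hset_def by blast
  qed
  then show ?thesis unfolding Zset_def by blast
qed

lemma null_of_meas0: "S \<in> sets Omega_inf \<Longrightarrow> measure (induced f0 f1 i) S = 0 \<Longrightarrow> S \<in> null_sets (induced f0 f1 i)"
  using finite_measure.emeasure_eq_measure[OF induced_finite, of f0 f1 i S] by (simp add: null_sets_def)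

lemma notpos_null: "{w. \<not> lr_pos f0 f1 j w} \<in> null_sets (induced f0 f1 j)"
proof -
  define Zn where "Zn n = {w. pmf (sel f0 f1 j (hist w f0 f1 n)) (w n) = 0}" for n
  have detZ: "det (Suc n) (Zn n)" for n
    unfolding det_def Zn_def
  proof (intro allI impI)
    fix v w :: "nat \<Rightarrow> bool" assume a: "\<forall>m<Suc n. v m = w m"
    then have "hist v f0 f1 n = hist w f0 f1 n" by (intro hist_dep) auto
    moreover have "v n = w n" using a by simp
    ultimately show "(v \<in> {w. pmf (sel f0 f1 j (hist w f0 f1 n)) (w n) = 0}) = (w \<in> {w. pmf (sel f0 f1 j (hist w f0 f1 n)) (w n) = 0})"
      by simp
  qed
  have Zn0: "Zn n \<in> null_sets (induced f0 f1 j)" for n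
  proof (rule null_of_meas0)
    show ms: "Zn n \<in> sets Omega_inf" by (rule det_meas[OF detZ])
    have eq: "{w. \<exists>s. s = Suc n \<and> w \<in> Zn n} = Zn n" by auto
    have "1 * measure (induced f0 f1 j) (UNIV \<inter> {w. \<exists>s. s = Suc n \<and> w \<in> Zn n}) \<le> 0 * measure (induced f0 f1 j) (UNIV \<inter> {w. \<exists>s. s = Suc n \<and> w \<in> Zn n})"
    proof (rule ext_ineq[OF induced_finite induced_sets induced_finite induced_sets])
      show "UNIV \<in> sets Omega_inf" using sets.top[of Omega_inf] by simp
      show "UNIV \<in> sets Omega_inf" using sets.top[of Omega_inf] by simp
      show "(s = Suc n \<and> v \<in> Zn n) = (s = Suc n \<and> w \<in> Zn n)" if "\<forall>n<s. v n = w n" for s v w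
        using detZ[of n] that unfolding det_def by blast
      fix w s assume "s = Suc n \<and> w \<in> Zn n"
      then have "measure (induced f0 f1 j) (cyl w s) = 0"
        by (auto simp: induced_cyl Zn_def intro!: prod_zero)
      then show "1 * measure (induced f0 f1 j) (UNIV \<inter> cyl w s) \<le> 0 * measure (induced f0 f1 j) (UNIV \<inter> cyl w s)"
        by simp
    qed
    then have "measure (induced f0 f1 j) (Zn n) \<le> 0" by (simp add: eq)
    then show "measure (induced f0 f1 j) (Zn n) = 0"
      using measure_nonneg[of "induced f0 f1 j" "Zn n"] by linarith
  qed
  have "{w. \<not> lr_pos f0 f1 j w} = (\<Union>n. Zn n)"
    by (auto simp: lr_pos_def Zn_def not_less pmf_nonneg intro: antisym)
  then show ?thesis using Zn0 by (simp add: null_sets_UN)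
qed

lemma singular:
  assumes Os: "Os \<in> sets Omega_inf" and O0: "measure (induced f0 f1 (1 - j)) Os = 0"
    and b: "b > 0"
    and Osub: "\<And>w. w \<in> Os \<Longrightarrow> lr_pos f0 f1 j w \<and> (\<forall>N. \<exists>s\<ge>N. lr f0 f1 j w s \<ge> b)"
  shows "measure (induced f0 f1 j) Os = 0"
proof (rule ccontr)
  assume "measure (induced f0 f1 j) Os \<noteq> 0"
  then have pos: "measure (induced f0 f1 j) Os > 0"
    using measure_nonneg[of "induced f0 f1 j" Os] by linarith
  define d where "d = b * measure (induced f0 f1 j) Os"
  have d: "d > 0" using pos b by (simp add: d_def)
  obtain U where U: "opn U" "Os \<subseteq> U" "measure (induced f0 f1 (1 - j)) U < d"
    using regular_null[OF induced_prob induced_sets Os O0 d] by blast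
  obtain L where L: "U = {w. \<exists>s. pre w s \<in> L}" using U(1) by (auto simp: opn_def)
  define Q where "Q w s \<longleftrightarrow> (\<exists>s'\<le>s. pre w s' \<in> L) \<and> posupto f0 f1 j w s \<and> lr f0 f1 j w s \<ge> b" for w s
  have Qdet: "Q v s = Q w s" if "\<forall>n<s. v n = w n" for s v w
  proof -
    have "pre v s' = pre w s'" if "s' \<le> s" for s' using that \<open>\<forall>n<s. v n = w n\<close> by (simp add: pre_eq_iff)
    then have "(\<exists>s'\<le>s. pre v s' \<in> L) = (\<exists>s'\<le>s. pre w s' \<in> L)" by auto
    then show ?thesis unfolding Q_def using posupto_dep[OF that] lr_dep[OF that] by simp
  qed
  let ?H = "{w. \<exists>s. Q w s}"
  have OH: "Os \<subseteq> ?H"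
  proof
    fix w assume w: "w \<in> Os"
    then obtain s' where s': "pre w s' \<in> L" using U(2) L by blast
    obtain s where s: "s \<ge> s'" "lr f0 f1 j w s \<ge> b" using Osub[OF w] by blast
    have "posupto f0 f1 j w s" using Osub[OF w] by (simp add: posupto_def lr_pos_def)
    then have "Q w s" unfolding Q_def using s s' by blast
    then show "w \<in> ?H" by blast
  qed
  have HU: "?H \<subseteq> U" unfolding L Q_def by blast
  have Hm: "?H \<in> sets Omega_inf"
  proof -
    have "?H = (\<Union>s. {w. Q w s})" by auto
    also have "\<dots> \<in> sets Omega_inf"
    proof (intro sets.countable_nat_UN subsetI, clarify)
      fix s
      have "det s {w. Q w s}" unfolding det_def using Qdet by blast
      then show "{w. Q w s} \<in> sets Omega_inf" by (rule det_meas)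
    qed
    finally show ?thesis .
  qed
  have "b * measure (induced f0 f1 j) ?H \<le> measure (induced f0 f1 (1 - j)) ?H"
    by (rule R_ge) (use Qdet in \<open>auto simp: Q_def\<close>)
  also have "\<dots> \<le> measure (induced f0 f1 (1 - j)) U"
    by (rule induced_mono[OF HU opn_meas[OF U(1)]])
  also have "\<dots> < d" by (rule U(3))
  finally have "b * measure (induced f0 f1 j) ?H < b * measure (induced f0 f1 j) Os" by (simp add: d_def)
  then have "measure (induced f0 f1 j) ?H < measure (induced f0 f1 j) Os" using b by simp
  moreover have "measure (induced f0 f1 j) Os \<le> measure (induced f0 f1 j) ?H"
    by (rule induced_mono[OF OH Hm])
  ultimately show False by simp
qed



lemma cyl_same: "u \<in> cyl w t \<Longrightarrow> cyl u t = cyl w t"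
  by (auto simp: cyl_def)

lemma density_cyl:
  assumes B: "B \<in> sets Omega_inf" and pos: "measure (induced f0 f1 k) B > 0"
    and e: "0 < e" "e < 1"
  shows "\<exists>w\<in>B. \<exists>t. measure (induced f0 f1 k) (B \<inter> cyl w t) > (1 - e) * measure (induced f0 f1 k) (cyl w t)"
proof (rule ccontr)
  let ?P = "induced f0 f1 k"
  assume "\<not> ?thesis"
  then have H: "measure ?P (B \<inter> cyl w t) \<le> (1 - e) * measure ?P (cyl w t)" if "w \<in> B" for w t
    using that by (auto simp: not_less)
  have H': "1 * measure ?P (B \<inter> cyl w t) \<le> (1 - e) * measure ?P (UNIV \<inter> cyl w t)" for w t
  proof (cases "B \<inter> cyl w t = {}")
    case True
    then show ?thesis using e by simp
  next
    case False
    then obtain u where u: "u \<in> B" "u \<in> cyl w t" by blast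
    show ?thesis using H[OF u(1), of t] cyl_same[OF u(2)] by simp
  qed
  define d where "d = e * measure ?P B / 2"
  have d: "d > 0" using e pos by (simp add: d_def)
  obtain U V where UV: "opn U" "opn V" "B \<subseteq> U" "- B \<subseteq> V" "measure ?P (U \<inter> V) < d"
    using regular[OF induced_prob induced_sets B] d by blast
  obtain L where L: "U = {w. \<exists>s. pre w s \<in> L}" using UV(1) by (auto simp: opn_def)
  have "1 * measure ?P (B \<inter> {w. \<exists>s. pre w s \<in> L}) \<le> (1 - e) * measure ?P (UNIV \<inter> {w. \<exists>s. pre w s \<in> L})"
  proof (rule ext_ineq[OF induced_finite induced_sets induced_finite induced_sets B])
    show "UNIV \<in> sets Omega_inf" using sets.top[of Omega_inf] by simp
    show "(pre v s \<in> L) = (pre w s \<in> L)" if "\<forall>n<s. v n = w n" for s v w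
      using that by (simp add: pre_eq_iff[symmetric])
    show "1 * measure ?P (B \<inter> cyl w s) \<le> (1 - e) * measure ?P (UNIV \<inter> cyl w s)" for w s
      by (rule H')
  qed
  then have "measure ?P B \<le> (1 - e) * measure ?P U" using UV(3) L by (simp add: Int_absorb2)
  moreover have "measure ?P U \<le> measure ?P B + measure ?P (U \<inter> V)"
  proof -
    have "measure ?P U \<le> measure ?P (B \<union> (U \<inter> V))"
      by (rule induced_mono) (use UV B opn_meas in auto)
    also have "\<dots> \<le> measure ?P B + measure ?P (U \<inter> V)"
      by (rule measure_Un_le) (use UV B opn_meas in auto)
    finally show ?thesis .
  qed
  ultimately have "measure ?P B \<le> (1 - e) * (measure ?P B + d)"
    using UV(5) e by (smt (verit) mult_left_mono)
  then have "e * measure ?P B \<le> (1 - e) * d" by (simp add: algebra_simps)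
  also have "\<dots> < d" using e d by simp
  finally have "e * measure ?P B < d" .
  then show False using mult_pos_pos[OF e(1) pos] by (simp add: d_def)
qed

definition gstrat :: "(nat \<Rightarrow> bool) \<Rightarrow> nat \<Rightarrow> hist_elem list \<Rightarrow> fstrat \<Rightarrow> fstrat" where
  "gstrat w t hp f = (\<lambda>h. if length h < t then return_pmf (w (length h)) else f (hp @ drop t h))"

lemma g_apply: "t \<le> length h \<Longrightarrow> gstrat w t hp f h = f (hp @ drop t h)"
  by (simp add: gstrat_def)

lemma g_hist:
  fixes f0 f1 :: fstrat and v w :: "nat \<Rightarrow> bool"
  assumes v: "v \<in> cyl w t"
  defines "hp \<equiv> hist w f0 f1 t"
  shows "drop t (hist v (gstrat w t hp f0) (gstrat w t hp f1) (t + m)) = drop t (hist v f0 f1 (t + m))"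
proof (induction m)
  case 0 then show ?case by simp
next
  case (Suc m)
  let ?g0 = "gstrat w t hp f0" and ?g1 = "gstrat w t hp f1"
  have hv: "hist v f0 f1 t = hp" unfolding hp_def using v by (intro hist_dep) (auto simp: cyl_def)
  have split: "hist v f0 f1 (t + m) = hp @ drop t (hist v f0 f1 (t + m))"
    using hist_prefix[of t v f0 f1 m] hv append_take_drop_id[of t "hist v f0 f1 (t + m)"] by simp
  have gi: "gstrat w t hp f (hist v ?g0 ?g1 (t + m)) = f (hist v f0 f1 (t + m))" for f
  proof -
    have "gstrat w t hp f (hist v ?g0 ?g1 (t + m)) = f (hp @ drop t (hist v ?g0 ?g1 (t + m)))"
      by (rule g_apply) simp
    also have "\<dots> = f (hist v f0 f1 (t + m))" by (simp only: Suc.IH split[symmetric])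
    finally show ?thesis .
  qed
  show ?case by (simp add: gi Suc.IH)
qed

lemma g_sel_high:
  fixes f0 f1 f :: fstrat and v w :: "nat \<Rightarrow> bool"
  assumes v: "v \<in> cyl w t" and n: "n \<ge> t"
  defines "hp \<equiv> hist w f0 f1 t"
  shows "gstrat w t hp f (hist v (gstrat w t hp f0) (gstrat w t hp f1) n) = f (hist v f0 f1 n)"
proof -
  obtain m where m: "n = t + m" using n le_Suc_ex by blast
  have hv: "hist v f0 f1 t = hp" unfolding hp_def using v by (intro hist_dep) (auto simp: cyl_def)
  have split: "hist v f0 f1 (t + m) = hp @ drop t (hist v f0 f1 (t + m))"
    using hist_prefix[of t v f0 f1 m] hv append_take_drop_id[of t "hist v f0 f1 (t + m)"] by simp
  have "gstrat w t hp f (hist v (gstrat w t hp f0) (gstrat w t hp f1) n)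
     = f (hp @ drop t (hist v (gstrat w t hp f0) (gstrat w t hp f1) (t + m)))"
    by (subst g_apply) (simp_all add: m)
  also have "\<dots> = f (hist v f0 f1 n)" using g_hist[OF v, of f0 f1 m] split m hp_def by simp
  finally show ?thesis .
qed

lemma g_sel_low:
  "n < t \<Longrightarrow> gstrat w t hp f (hist v g0 g1 n) = return_pmf (w n)"
  by (simp add: gstrat_def)

lemma sel_gstrat: "sel (gstrat w t hp f0) (gstrat w t hp f1) i = gstrat w t hp (sel f0 f1 i)"
  by (simp add: sel_def)

lemma g_tail:
  fixes f0 f1 :: fstrat and v w :: "nat \<Rightarrow> bool"
  assumes tail: "tail_test T" and t: "t \<ge> 1" and v: "v \<in> cyl w t"
    and p0: "posupto f0 f1 0 w t" and p1: "posupto f0 f1 1 w t"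
  defines "hp \<equiv> hist w f0 f1 t"
  shows "T v (gstrat w t hp f0) (gstrat w t hp f1) = T v f0 f1"
proof -
  let ?g0 = "gstrat w t hp f0" and ?g1 = "gstrat w t hp f1"
  have vw: "\<forall>n<t. v n = w n" using v by (simp add: cyl_def)
  have "eventually_coincide v ?g0 ?g1 v f0 f1"
    unfolding eventually_coincide_def
  proof (intro exI[of _ "Suc t"] conjI allI impI ballI)
    show "1 < Suc t" using t by simp
    fix k assume "Suc t - 1 \<le> k"
    then have k: "t \<le> k" by simp
    show "path v ?g0 ?g1 k = path v f0 f1 k"
      unfolding path_def using g_sel_high[OF v k, of f0 f1] hp_def by simp
  next
    fix k i assume k: "k < Suc t - 1" and i: "i \<in> {0::nat, 1}"
    then have k': "k < t" by simp
    have "sel ?g0 ?g1 i (hist v ?g0 ?g1 k) = return_pmf (w k)"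
      by (simp add: sel_gstrat g_sel_low[OF k'])
    then show "0 < pmf (sel ?g0 ?g1 i (hist v ?g0 ?g1 k)) (v k)"
      using vw k' by (simp add: pmf_return)
    have "hist v f0 f1 k = hist w f0 f1 k" using vw k' by (intro hist_dep) auto
    moreover have "0 < pmf (sel f0 f1 i (hist w f0 f1 k)) (w k)"
      using i p0 p1 k' by (auto simp: posupto_def)
    ultimately show "0 < pmf (sel f0 f1 i (hist v f0 f1 k)) (v k)" using vw k' by simp
  qed
  then show ?thesis using tail unfolding tail_test_def by blast
qed



lemma induced_space[simp]: "space (induced f0 f1 i) = UNIV"
  using sets_eq_imp_space_eq[OF induced_sets[of f0 f1 i]] by simp

lemma prod_split_lt: "t \<le> s \<Longrightarrow> (\<Prod>n<s. F n) = (\<Prod>n<t. F n) * (\<Prod>n\<in>{t..<s}. F n)"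
  for F :: "nat \<Rightarrow> real"
  using prod.atLeastLessThan_concat[of 0 t s F] by (simp add: atLeast0LessThan)

lemma g_cyl_real:
  fixes f0 f1 :: fstrat and u w :: "nat \<Rightarrow> bool"
  assumes c: "measure (induced f0 f1 k) (cyl w t) > 0"
  defines "hp \<equiv> hist w f0 f1 t"
  shows "measure (induced (gstrat w t hp f0) (gstrat w t hp f1) k) (cyl u s) =
     measure (induced f0 f1 k) (cyl w t \<inter> cyl u s) / measure (induced f0 f1 k) (cyl w t)"
proof -
  let ?g0 = "gstrat w t hp f0" and ?g1 = "gstrat w t hp f1"
  let ?P = "induced f0 f1 k" and ?c = "measure (induced f0 f1 k) (cyl w t)"
  define G where "G n = pmf (sel ?g0 ?g1 k (hist u ?g0 ?g1 n)) (u n)" for n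
  define F where "F n = pmf (sel f0 f1 k (hist u f0 f1 n)) (u n)" for n
  have lhs: "measure (induced ?g0 ?g1 k) (cyl u s) = (\<Prod>n<s. G n)"
    by (simp add: induced_cyl G_def)
  have Glow: "G n = (if u n = w n then 1 else 0)" if "n < t" for n
    using that by (simp add: G_def sel_gstrat g_sel_low pmf_return)
  show ?thesis
  proof (cases "\<exists>n<min s t. u n \<noteq> w n")
    case True
    then obtain n where n: "n < s" "n < t" "u n \<noteq> w n" by auto
    have "(\<Prod>n<s. G n) = 0" using n Glow[of n] by (intro prod_zero) auto
    moreover have "cyl w t \<inter> cyl u s = {}" using n by (auto simp: cyl_def)
    ultimately show ?thesis using lhs by simp
  next
    case False
    then have agree: "\<forall>n<min s t. u n = w n" by simp
    show ?thesis
    proof (cases "s \<le> t")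
      case True
      have "(\<Prod>n<s. G n) = (\<Prod>n<s. 1)" using agree True Glow by (intro prod.cong) auto
      moreover have "cyl w t \<inter> cyl u s = cyl w t" using agree True by (auto simp: cyl_def)
      ultimately show ?thesis using lhs c by simp
    next
      case False
      then have ts: "t \<le> s" by simp
      have uC: "u \<in> cyl w t" using agree ts by (auto simp: cyl_def min_def)
      have e1: "cyl w t \<inter> cyl u s = cyl u s" using agree ts by (auto simp: cyl_def)
      have e2: "?c = (\<Prod>n<t. F n)"
        by (simp add: cyl_same[OF uC, symmetric] induced_cyl F_def)
      have e3: "measure ?P (cyl u s) = (\<Prod>n<t. F n) * (\<Prod>n\<in>{t..<s}. F n)"
        by (simp add: induced_cyl F_def prod_split_lt[OF ts])
      have e4: "(\<Prod>n<s. G n) = (\<Prod>n\<in>{t..<s}. F n)"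
      proof -
        have "(\<Prod>n<s. G n) = (\<Prod>n<t. G n) * (\<Prod>n\<in>{t..<s}. G n)" by (rule prod_split_lt[OF ts])
        moreover have "(\<Prod>n<t. G n) = 1" using agree ts Glow by (intro prod.neutral) (auto simp: min_def)
        moreover have "(\<Prod>n\<in>{t..<s}. G n) = (\<Prod>n\<in>{t..<s}. F n)"
        proof (rule prod.cong)
          fix n assume "n \<in> {t..<s}"
          then have "t \<le> n" by simp
          have "gstrat w t hp (sel f0 f1 k) (hist u ?g0 ?g1 n) = sel f0 f1 k (hist u f0 f1 n)"
            unfolding hp_def by (rule g_sel_high[OF uC \<open>t \<le> n\<close>])
          then show "G n = F n"
            unfolding G_def F_def sel_gstrat by simp
        qed simp
        ultimately show ?thesis by simp
      qed
      have a: "(\<Prod>n<t. F n) \<noteq> 0"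
      proof
        assume "(\<Prod>n<t. F n) = 0"
        then show False using c e2 by linarith
      qed
      show ?thesis unfolding lhs e1 e3 e4 e2 by (simp only: nonzero_mult_div_cancel_left[OF a])
    qed
  qed
qed

lemma g_measure:
  fixes f0 f1 :: fstrat and w :: "nat \<Rightarrow> bool"
  assumes c: "measure (induced f0 f1 k) (cyl w t) > 0" and A: "A \<in> sets Omega_inf"
  defines "hp \<equiv> hist w f0 f1 t"
  shows "measure (induced (gstrat w t hp f0) (gstrat w t hp f1) k) A =
     measure (induced f0 f1 k) (cyl w t \<inter> A) / measure (induced f0 f1 k) (cyl w t)"
proof -
  let ?g0 = "gstrat w t hp f0" and ?g1 = "gstrat w t hp f1"
  let ?P = "induced f0 f1 k" and ?c = "measure (induced f0 f1 k) (cyl w t)" and ?C = "cyl w t"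
  define M2 where "M2 = density ?P (\<lambda>v. ennreal (1 / ?c) * indicator ?C v)"
  have Cm[measurable]: "?C \<in> sets ?P" by simp
  have sM2: "sets M2 = sets Omega_inf" by (simp add: M2_def)
  have em: "emeasure M2 X = ennreal (1 / ?c) * emeasure ?P (?C \<inter> X)" if X: "X \<in> sets Omega_inf" for X
  proof -
    have Xm[measurable]: "X \<in> sets ?P" using X by simp
    have "emeasure M2 X = (\<integral>\<^sup>+ v. ennreal (1 / ?c) * indicator ?C v * indicator X v \<partial>?P)"
      unfolding M2_def by (rule emeasure_density) measurable
    also have "\<dots> = (\<integral>\<^sup>+ v. ennreal (1 / ?c) * indicator (?C \<inter> X) v \<partial>?P)"
      by (rule nn_integral_cong) (simp split: split_indicator)
    also have "\<dots> = ennreal (1 / ?c) * emeasure ?P (?C \<inter> X)"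
      by (rule nn_integral_cmult_indicator) (use X in \<open>simp add: sets.Int\<close>)
    finally show ?thesis .
  qed
  have emr: "emeasure M2 X = ennreal (measure ?P (?C \<inter> X) / ?c)" if X: "X \<in> sets Omega_inf" for X
  proof -
    have "emeasure ?P (?C \<inter> X) = ennreal (measure ?P (?C \<inter> X))"
      using finite_measure.emeasure_eq_measure[OF induced_finite] by blast
    then show ?thesis using em[OF X] c by (simp add: ennreal_mult'[symmetric] divide_inverse mult.commute)
  qed
  have fM2: "finite_measure M2"
  proof (rule finite_measureI)
    have "space M2 = UNIV" by (simp add: M2_def)
    then show "emeasure M2 (space M2) \<noteq> \<infinity>" using emr[of UNIV] sets.top[of Omega_inf] by simp
  qed
  have eq: "induced ?g0 ?g1 k = M2"
  proof (rule cyl_unique[OF induced_finite induced_sets fM2 sM2])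
    fix u s
    have "emeasure (induced ?g0 ?g1 k) (cyl u s) = ennreal (measure (induced ?g0 ?g1 k) (cyl u s))"
      using finite_measure.emeasure_eq_measure[OF induced_finite] by blast
    also have "\<dots> = ennreal (measure ?P (?C \<inter> cyl u s) / ?c)"
      using g_cyl_real[OF c, of u s] hp_def by simp
    also have "\<dots> = emeasure M2 (cyl u s)" using emr[of "cyl u s"] by simp
    finally show "emeasure (induced ?g0 ?g1 k) (cyl u s) = emeasure M2 (cyl u s)" .
  qed
  have "emeasure (induced ?g0 ?g1 k) A = ennreal (measure ?P (?C \<inter> A) / ?c)"
    using eq emr[OF A] by simp
  moreover have "measure ?P (?C \<inter> A) / ?c \<ge> 0" using c by simp
  ultimately show ?thesis by (simp add: measure_def)
qed



lemma DEZ_iff: "D_exists_zero f0 f1 j w \<longleftrightarrow> lr_pos f0 f1 j w \<and> (\<lambda>t. lr f0 f1 j w t) \<longlonglongrightarrow> 0"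
proof (cases "lr_pos f0 f1 j w")
  case False
  then show ?thesis by (simp add: D_exists_zero_def upper_D_def lower_D_def)
next
  case True
  let ?X = "\<lambda>t. ereal (lr f0 f1 j w t)"
  have "D_exists_zero f0 f1 j w \<longleftrightarrow> (limsup ?X = 0 \<and> liminf ?X = 0)"
    using True by (auto simp: D_exists_zero_def upper_D_def lower_D_def)
  also have "\<dots> \<longleftrightarrow> (?X \<longlonglongrightarrow> ereal 0)"
    using tendsto_iff_Liminf_eq_Limsup[of sequentially ?X "ereal 0"] by (auto simp: zero_ereal_def)
  also have "\<dots> \<longleftrightarrow> (\<lambda>t. lr f0 f1 j w t) \<longlonglongrightarrow> 0" by (rule lim_ereal)
  finally show ?thesis using True by simp
qed

lemma lr_nonneg: "lr f0 f1 j w t \<ge> 0"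
  unfolding lr_def by (intro prod_nonneg) auto

lemma lr_mult_one:
  assumes "lr_pos f0 f1 0 w" "lr_pos f0 f1 1 w"
  shows "lr f0 f1 0 w t * lr f0 f1 1 w t = 1"
proof -
  have "lr f0 f1 0 w t * lr f0 f1 1 w t =
     (\<Prod>n<t. pmf (sel f0 f1 1 (hist w f0 f1 n)) (w n) / pmf (sel f0 f1 0 (hist w f0 f1 n)) (w n) *
       (pmf (sel f0 f1 0 (hist w f0 f1 n)) (w n) / pmf (sel f0 f1 1 (hist w f0 f1 n)) (w n)))"
    unfolding lr_def by (simp only: diff_zero diff_self_eq_0 prod.distrib)
  also have "\<dots> = (\<Prod>n<t. 1)"
  proof (rule prod.cong)
    fix n
    have "pmf (sel f0 f1 0 (hist w f0 f1 n)) (w n) > 0" "pmf (sel f0 f1 1 (hist w f0 f1 n)) (w n) > 0"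
      using assms by (auto simp: lr_pos_def)
    then show "pmf (sel f0 f1 1 (hist w f0 f1 n)) (w n) / pmf (sel f0 f1 0 (hist w f0 f1 n)) (w n) *
       (pmf (sel f0 f1 0 (hist w f0 f1 n)) (w n) / pmf (sel f0 f1 1 (hist w f0 f1 n)) (w n)) = 1"
      by simp
  qed simp
  finally show ?thesis by simp
qed

lemma not_both: "\<not> (D_exists_zero f0 f1 0 w \<and> D_exists_zero f0 f1 1 w)"
proof
  assume a: "D_exists_zero f0 f1 0 w \<and> D_exists_zero f0 f1 1 w"
  then have p: "lr_pos f0 f1 0 w" "lr_pos f0 f1 1 w"
    and l: "(\<lambda>t. lr f0 f1 0 w t) \<longlonglongrightarrow> 0" "(\<lambda>t. lr f0 f1 1 w t) \<longlonglongrightarrow> 0"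
    by (auto simp: DEZ_iff)
  have "(\<lambda>t. lr f0 f1 0 w t * lr f0 f1 1 w t) \<longlonglongrightarrow> 0 * 0"
    by (rule tendsto_mult[OF l])
  moreover have "(\<lambda>t. lr f0 f1 0 w t * lr f0 f1 1 w t) = (\<lambda>t. 1)"
    using lr_mult_one[OF p] by simp
  ultimately have "(\<lambda>t::nat. 1::real) \<longlonglongrightarrow> 0" by simp
  then show False using LIMSEQ_unique[OF tendsto_const] by fastforce
qed

lemma lr_to_zero_if_other_zero:
  assumes "\<not> lr_pos f0 f1 (1 - j) w"
  shows "(\<lambda>t. lr f0 f1 j w t) \<longlonglongrightarrow> 0"
proof -
  obtain n where n: "pmf (sel f0 f1 (1 - j) (hist w f0 f1 n)) (w n) = 0"
    using assms pmf_nonneg by (auto simp: lr_pos_def not_less intro: antisym)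
  have "eventually (\<lambda>t. lr f0 f1 j w t = 0) sequentially"
    unfolding eventually_sequentially
  proof (intro exI allI impI)
    fix t assume "Suc n \<le> t"
    then show "lr f0 f1 j w t = 0" unfolding lr_def using n by (intro prod_zero) (auto intro!: bexI[of _ n])
  qed
  then show ?thesis by (rule tendsto_eventually)
qed

lemma not_tendsto_io:
  assumes "\<not> (\<lambda>t. lr f0 f1 j w t) \<longlonglongrightarrow> 0"
  shows "\<exists>m. \<forall>N. \<exists>s\<ge>N. lr f0 f1 j w s \<ge> 1 / real (Suc m)"
proof (rule ccontr)
  assume "\<not> ?thesis"
  then have H: "\<forall>m. \<exists>N. \<forall>s\<ge>N. lr f0 f1 j w s < 1 / real (Suc m)"
    by (meson not_le)
  have "(\<lambda>t. lr f0 f1 j w t) \<longlonglongrightarrow> 0"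
  proof (rule LIMSEQ_I)
    fix r :: real assume r: "0 < r"
    obtain m where m: "inverse (real (Suc m)) < r" using reals_Archimedean[OF r] by blast
    obtain N where N: "\<forall>s\<ge>N. lr f0 f1 j w s < 1 / real (Suc m)" using H by blast
    show "\<exists>no. \<forall>n\<ge>no. norm (lr f0 f1 j w n - 0) < r"
    proof (intro exI allI impI)
      fix n assume "N \<le> n"
      then have "lr f0 f1 j w n < 1 / real (Suc m)" using N by blast
      then show "norm (lr f0 f1 j w n - 0) < r" using m lr_nonneg[of f0 f1 j w n]
        by (simp add: inverse_eq_divide)
    qed
  qed
  then show False using assms by simp
qed

lemma Tset_meas:
  assumes "comparison_test T"
  shows "{w. T w g0 g1 = x} \<in> sets Omega_inf"
proof -
  have m: "(\<lambda>w. T w g0 g1) \<in> borel_measurable Omega_inf" using assms by (simp add: comparison_test_def)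
  have "(\<lambda>w. T w g0 g1) -` {x} \<inter> space Omega_inf \<in> sets Omega_inf"
    by (rule measurable_sets[OF m]) simp
  then show ?thesis by (simp add: vimage_def)
qed

lemma pos_meas: "{w. lr_pos f0 f1 j w} \<in> sets Omega_inf"
proof -
  have "{w. \<not> lr_pos f0 f1 j w} \<in> sets Omega_inf"
    using notpos_null[of f0 f1 j] by (auto simp: null_sets_def)
  then have "UNIV - {w. \<not> lr_pos f0 f1 j w} \<in> sets Omega_inf"
    using sets.compl_sets[of "{w. \<not> lr_pos f0 f1 j w}" Omega_inf] by simp
  moreover have "UNIV - {w. \<not> lr_pos f0 f1 j w} = {w. lr_pos f0 f1 j w}" by auto
  ultimately show ?thesis by simp
qed

lemma io_meas: "{w. \<forall>N. \<exists>s\<ge>N. lr f0 f1 j w s \<ge> b} \<in> sets Omega_inf"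
proof -
  have d: "{w. N \<le> s \<and> lr f0 f1 j w s \<ge> b} \<in> sets Omega_inf" for N s
  proof (rule det_meas)
    show "det s {w. N \<le> s \<and> lr f0 f1 j w s \<ge> b}"
      unfolding det_def
    proof (intro allI impI)
      fix v w :: "nat \<Rightarrow> bool" assume "\<forall>n<s. v n = w n"
      then have "lr f0 f1 j v s = lr f0 f1 j w s" by (rule lr_dep)
      then show "(v \<in> {w. N \<le> s \<and> lr f0 f1 j w s \<ge> b}) = (w \<in> {w. N \<le> s \<and> lr f0 f1 j w s \<ge> b})"
        by simp
    qed
  qed
  have u: "(\<Union>s. {w. N \<le> s \<and> lr f0 f1 j w s \<ge> b}) \<in> sets Omega_inf" for N
    using d by (intro sets.countable_nat_UN) blast
  have "{w. \<forall>N. \<exists>s\<ge>N. lr f0 f1 j w s \<ge> b} = (\<Inter>N\<in>UNIV. \<Union>s. {w. N \<le> s \<and> lr f0 f1 j w s \<ge> b})" by auto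
  also have "\<dots> \<in> sets Omega_inf"
    using u by (intro sets.countable_INT) blast+
  finally show ?thesis .
qed



lemma manip:
  assumes ct: "comparison_test T" and tail: "tail_test T"
    and B: "B \<in> sets Omega_inf"
    and Bsub: "\<And>w. w \<in> B \<Longrightarrow> T w f0 f1 = x \<and> lr_pos f0 f1 0 w \<and> lr_pos f0 f1 1 w"
    and pos: "measure (induced f0 f1 k) B > 0" and e: "0 < e" "e < 1"
  shows "\<exists>g0 g1. measure (induced g0 g1 k) {w. T w g0 g1 = x} > 1 - e"
proof -
  let ?P = "induced f0 f1 k"
  obtain w t where w: "w \<in> B" and wt: "measure ?P (B \<inter> cyl w t) > (1 - e) * measure ?P (cyl w t)"
    using density_cyl[OF B pos e] by blast
  have Tm: "{v. T v f0 f1 = x} \<in> sets Omega_inf" by (rule Tset_meas[OF ct])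
  have BT: "B \<subseteq> {v. T v f0 f1 = x}" using Bsub by blast
  show ?thesis
  proof (cases "t = 0")
    case True
    then have C: "cyl w t = UNIV" by (simp add: cyl_def)
    have one: "measure ?P UNIV = 1" using prob_space.prob_space[OF induced_prob[of f0 f1 k]] by simp
    have "measure ?P (B \<inter> cyl w t) > 1 - e" using wt C one by simp
    then have "measure ?P B > 1 - e" using C by simp
    moreover have "measure ?P B \<le> measure ?P {v. T v f0 f1 = x}" by (rule induced_mono[OF BT Tm])
    ultimately have "measure ?P {v. T v f0 f1 = x} > 1 - e" by linarith
    then show ?thesis by blast
  next
    case False
    then have t1: "t \<ge> 1" by simp
    have p0: "posupto f0 f1 0 w t" "posupto f0 f1 1 w t"
      using Bsub[OF w] by (auto simp: posupto_def lr_pos_def)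
    have ce: "(1 - e) * measure ?P (cyl w t) \<ge> 0" using e by simp
    have c: "measure ?P (cyl w t) > 0"
    proof -
      have "measure ?P (B \<inter> cyl w t) \<le> measure ?P (cyl w t)" by (rule induced_mono) simp_all
      then show ?thesis using wt ce by linarith
    qed
    let ?g0 = "gstrat w t (hist w f0 f1 t) f0" and ?g1 = "gstrat w t (hist w f0 f1 t) f1"
    have Tg: "{v. T v ?g0 ?g1 = x} \<in> sets Omega_inf" by (rule Tset_meas[OF ct])
    have eqs: "cyl w t \<inter> {v. T v ?g0 ?g1 = x} = cyl w t \<inter> {v. T v f0 f1 = x}"
      using g_tail[OF tail t1 _ p0] by auto
    have "measure (induced ?g0 ?g1 k) {v. T v ?g0 ?g1 = x} = measure ?P (cyl w t \<inter> {v. T v ?g0 ?g1 = x}) / measure ?P (cyl w t)"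
      by (rule g_measure[OF c Tg])
    also have "\<dots> = measure ?P (cyl w t \<inter> {v. T v f0 f1 = x}) / measure ?P (cyl w t)"
      by (simp only: eqs)
    also have "\<dots> \<ge> measure ?P (B \<inter> cyl w t) / measure ?P (cyl w t)"
    proof (rule divide_right_mono)
      show "measure ?P (B \<inter> cyl w t) \<le> measure ?P (cyl w t \<inter> {v. T v f0 f1 = x})"
        by (rule induced_mono) (use BT Tm in auto)
    qed (use c in simp)
    finally have "measure (induced ?g0 ?g1 k) {v. T v ?g0 ?g1 = x} \<ge> measure ?P (B \<inter> cyl w t) / measure ?P (cyl w t)" .
    moreover have "measure ?P (B \<inter> cyl w t) / measure ?P (cyl w t) > 1 - e"
      using wt c by (simp add: pos_less_divide_eq)
    ultimately have "measure (induced ?g0 ?g1 k) {v. T v ?g0 ?g1 = x} > 1 - e" by linarith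
    then show ?thesis by blast
  qed
qed



theorem theorem3:
  fixes T :: "(nat \<Rightarrow> bool) \<Rightarrow> fstrat \<Rightarrow> fstrat \<Rightarrow> real"
  assumes "comparison_test T"
    and "anonymous T"
    and "non_counterfactual T"
    and "reasonable T"
    and "tail_test T"
    and "\<not> test_equiv T deriv_test"
  shows "\<forall>\<epsilon>::real. 0 < \<epsilon> \<and> \<epsilon> < 1 \<longrightarrow>
           (\<exists>g0 g1. measure (induced g0 g1 0) {w. T w g0 g1 = 1} > 1 - \<epsilon>
                  \<or> measure (induced g0 g1 1) {w. T w g0 g1 = 0} > 1 - \<epsilon>)"
proof (rule ccontr)
  assume "\<not> ?thesis"
  then obtain e :: real where e: "0 < e" "e < 1"
    and no0: "\<And>g0 g1. \<not> measure (induced g0 g1 0) {w. T w g0 g1 = 1} > 1 - e"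
    and no1: "\<And>g0 g1. \<not> measure (induced g0 g1 1) {w. T w g0 g1 = 0} > 1 - e"
    by blast
  have ct: "comparison_test T" and tail: "tail_test T" and reas: "reasonable T" using assms by auto
  have noman: "measure (induced f0 f1 k) B = 0"
    if k: "k \<in> {0, 1}" and B: "B \<in> sets Omega_inf"
      and Bs: "\<And>w. w \<in> B \<Longrightarrow> T w f0 f1 = real (1 - k) \<and> lr_pos f0 f1 0 w \<and> lr_pos f0 f1 1 w"
    for f0 f1 k B
  proof (rule ccontr)
    assume "measure (induced f0 f1 k) B \<noteq> 0"
    then have pos: "measure (induced f0 f1 k) B > 0"
      using measure_nonneg[of "induced f0 f1 k" B] by linarith
    obtain g0 g1 where g: "measure (induced g0 g1 k) {w. T w g0 g1 = real (1 - k)} > 1 - e"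
      using manip[OF ct tail B Bs pos e] by blast
    show False
    proof (cases "k = 0")
      case True then show False using g no0[of g0 g1] by simp
    next
      case False then have "k = 1" using k by simp
      then show False using g no1[of g0 g1] by simp
    qed
  qed
  have "test_equiv T deriv_test"
    unfolding test_equiv_def
  proof (intro allI impI)
    fix f0 f1 :: fstrat and i :: nat assume i: "i \<in> {0, 1}"
    let ?P = "induced f0 f1 i" and ?Q = "induced f0 f1 (1 - i)"
    have ii: "1 - (1 - i) = i" using i by auto
    have i': "1 - i \<in> {0, 1}" using i by auto
    define PB where "PB = {w. lr_pos f0 f1 0 w} \<inter> {w. lr_pos f0 f1 1 w}"
    have PBm: "PB \<in> sets Omega_inf" unfolding PB_def by (intro sets.Int pos_meas)
    have PBi: "lr_pos f0 f1 i w" if "w \<in> PB" for w using that i by (auto simp: PB_def)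
    define N0 where "N0 = {w. \<not> lr_pos f0 f1 i w}"
    define Z1 where "Z1 = Zset f0 f1 i \<inter> (UNIV - {w. T w f0 f1 = real i})"
    define Z2 where "Z2 = Zset f0 f1 (1 - i)"
    define Y1 where "Y1 = {w. T w f0 f1 = real (1 - i)} \<inter> PB"
    define Om where "Om m = {w. T w f0 f1 = real i} \<inter> PB \<inter> {w. \<forall>N. \<exists>s\<ge>N. lr f0 f1 i w s \<ge> 1 / real (Suc m)}" for m
    have n0: "N0 \<in> null_sets ?P" unfolding N0_def by (rule notpos_null)
    have Z1m: "Z1 \<in> sets Omega_inf" unfolding Z1_def
      by (intro sets.Int sets.Diff Z_meas Tset_meas[OF ct]) (use sets.top[of Omega_inf] in simp)
    have z1: "Z1 \<in> null_sets ?P"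
    proof (rule null_of_meas0[OF Z1m])
      have "measure ?Q Z1 \<le> measure ?Q (Zset f0 f1 i)" by (rule induced_mono) (auto simp: Z1_def Z_meas)
      then have q0: "measure ?Q Z1 = 0" using Z_null[of f0 f1 i] measure_nonneg[of ?Q Z1] by linarith
      show "measure ?P Z1 = 0"
      proof (rule ccontr)
        assume "measure ?P Z1 \<noteq> 0"
        then have "measure ?P Z1 > 0" using measure_nonneg[of ?P Z1] by linarith
        then have "measure ?P (Z1 \<inter> {w. T w f0 f1 = real i}) > 0"
          using reas i Z1m q0 unfolding reasonable_def by blast
        moreover have "Z1 \<inter> {w. T w f0 f1 = real i} = {}" by (auto simp: Z1_def)
        ultimately show False by simp
      qed
    qed
    have z2: "Z2 \<in> null_sets ?P"
      unfolding Z2_def by (rule null_of_meas0[OF Z_meas]) (use Z_null[of f0 f1 "1 - i"] ii in simp)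
    have Y1m: "Y1 \<in> sets Omega_inf" unfolding Y1_def by (intro sets.Int Tset_meas[OF ct] PBm)
    have y1: "Y1 \<in> null_sets ?P"
      by (rule null_of_meas0[OF Y1m]) (rule noman[OF i Y1m], auto simp: Y1_def PB_def)
    have om: "Om m \<in> null_sets ?P" for m
    proof -
      have Omm: "Om m \<in> sets Omega_inf" unfolding Om_def by (intro sets.Int Tset_meas[OF ct] PBm io_meas)
      have q: "measure (induced f0 f1 (1 - i)) (Om m) = 0"
        by (rule noman[OF i' Omm]) (unfold ii, auto simp: Om_def PB_def)
      have "measure ?P (Om m) = 0"
      proof (rule singular[OF Omm q])
        show "0 < 1 / real (Suc m)" by simp
        fix w assume "w \<in> Om m"
        then show "lr_pos f0 f1 i w \<and> (\<forall>N. \<exists>s\<ge>N. 1 / real (Suc m) \<le> lr f0 f1 i w s)"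
          using PBi by (auto simp: Om_def)
      qed
      then show ?thesis by (rule null_of_meas0[OF Omm])
    qed
    have Nn: "N0 \<union> Z1 \<union> Z2 \<union> Y1 \<union> (\<Union>m. Om m) \<in> null_sets ?P"
      using n0 z1 z2 y1 om by (intro null_sets.Un null_sets_UN) auto
    show "AE w in ?P. T w f0 f1 = deriv_test w f0 f1"
    proof (rule AE_I'[OF Nn], rule subsetI)
      fix w assume "w \<in> {w \<in> space ?P. T w f0 f1 \<noteq> deriv_test w f0 f1}"
      then have ne: "T w f0 f1 \<noteq> deriv_test w f0 f1" by simp
      show "w \<in> N0 \<union> Z1 \<union> Z2 \<union> Y1 \<union> (\<Union>m. Om m)"
      proof (cases "lr_pos f0 f1 i w")
        case False then show ?thesis by (simp add: N0_def)
      next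
        case lp: True
        show ?thesis
        proof (cases "D_exists_zero f0 f1 i w")
          case True
          have D: "deriv_test w f0 f1 = real i"
          proof (cases "i = 0")
            case True
            then have "\<not> D_exists_zero f0 f1 1 w" using not_both[of f0 f1 w] \<open>D_exists_zero f0 f1 i w\<close> by auto
            then show ?thesis using True \<open>D_exists_zero f0 f1 i w\<close> by (simp add: deriv_test_def)
          next
            case False then have "i = 1" using i by simp
            then show ?thesis using \<open>D_exists_zero f0 f1 i w\<close> by (simp add: deriv_test_def)
          qed
          have "w \<in> Zset f0 f1 i" using True by (intro Z_contains) (auto simp: DEZ_iff)
          then have "w \<in> Z1" using ne D by (simp add: Z1_def)
          then show ?thesis by blast
        next
          case notDi: False
          show ?thesis
          proof (cases "D_exists_zero f0 f1 (1 - i) w")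
            case True
            have "w \<in> Zset f0 f1 (1 - i)" using True by (intro Z_contains) (auto simp: DEZ_iff)
            then show ?thesis by (simp add: Z2_def)
          next
            case notDi': False
            have nd0: "\<not> D_exists_zero f0 f1 0 w" and nd1: "\<not> D_exists_zero f0 f1 1 w"
              using notDi notDi' i by auto
            have D: "deriv_test w f0 f1 = 1/2" using nd0 nd1 by (simp add: deriv_test_def)
            have Tv: "T w f0 f1 \<in> {0, 1/2, 1}" using ct by (simp add: comparison_test_def)
            have lp': "lr_pos f0 f1 (1 - i) w"
            proof (rule ccontr)
              assume "\<not> lr_pos f0 f1 (1 - i) w"
              then have "(\<lambda>t. lr f0 f1 i w t) \<longlonglongrightarrow> 0" by (rule lr_to_zero_if_other_zero)
              then show False using notDi lp by (simp add: DEZ_iff)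
            qed
            have wPB: "w \<in> PB" using lp lp' i by (auto simp: PB_def)
            have "T w f0 f1 = real i \<or> T w f0 f1 = real (1 - i)"
              using Tv ne D i by auto
            then show ?thesis
            proof
              assume Ti: "T w f0 f1 = real i"
              have "\<not> (\<lambda>t. lr f0 f1 i w t) \<longlonglongrightarrow> 0" using notDi lp by (simp add: DEZ_iff)
              then obtain m where "\<forall>N. \<exists>s\<ge>N. lr f0 f1 i w s \<ge> 1 / real (Suc m)"
                using not_tendsto_io by blast
              then have "w \<in> Om m" using Ti wPB by (simp add: Om_def)
              then show ?thesis by blast
            next
              assume "T w f0 f1 = real (1 - i)"
              then have "w \<in> Y1" using wPB by (simp add: Y1_def)
              then show ?thesis by blast
            qed
          qed
        qed
      qed
    qed
  qed
  then show False using assms(6) by simp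
qed


end
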